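(* Let $\phi,\psi$ be Drinfeld modules over $K$ with $r=\operatorname{rk}\phi-\operatorname{rk}\psi>0$, and put $n=\operatorname{rk}\phi$. Equip $K\{\tau\}_{<n}=\{\sum_{i=0}^{n-1}c_i\tau^i\}$ with the $\mathbb F_q[t]$-module structure transported from $\operatorname{Ext}^1_\tau(\phi,\psi)$ via the bijection $w\mapsto[\delta]$, $\delta(t)=w$, and let $K\{\tau\}_{\langle1,n)}=\{\sum_{i=1}^{n-1}c_i\tau^i\mid c_i\in K\}$. Then: (i) there is an isomorphism of $\mathbb F_q[t]$-modules $\operatorname{Ext}^1_{0,\tau}(\phi,\psi)\cong K\{\tau\}_{\langle1,n)}$; (ii) $K\{\tau\}_{\langle1,n)}$ is an $\mathbb F_q[t]$-submodule of $K\{\tau\}_{<n}$; (iii) $\operatorname{Ext}^1_{0,\tau}(\phi,\psi)$ is an $\mathbb F_q[t]$-submodule of $\operatorname{Ext}^1_\tau(\phi,\psi)$; (iv) $\operatorname{Ext}^1_{0,\tau}(\phi,\psi)$ has a natural structure of a $\mathbf t$-module (i.e. there is a $\mathbf t$-module $\Pi^0:\mathbb F_q[t]\to\mathrm{Mat}_{n-1}(K\{\tau\})$ whose Mordell–Weil $\mathbb F_q[t]$-module is isomorphic to $\operatorname{Ext}^1_{0,\tau}(\phi,\psi)$, the isomorphism being given in the coordinates $c_1,\dots,c_{n-1}$ above).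
   Context: $A=\mathbb F_q[t]$, $K$ a field of characteristic $p$ with $\mathbb F_q$-algebra map $\iota:A\to K$, $\theta=\iota(t)$; $K\{\tau\}$ twisted polynomials, $\tau x=x^q\tau$. A $\mathbf t$-module of dimension $d$: $\mathbb F_q$-algebra homomorphism $\Phi:\mathbb F_q[t]\to\mathrm{Mat}_d(K\{\tau\})$, $\Phi_t=(\theta I+N)+\sum_{i\ge1}M_i\tau^i$, $N$ nilpotent; rank $=\deg_\tau\Phi_t$; Drinfeld module = dimension one. Its Mordell–Weil module is $K^d$ with $t$ acting by evaluation of $\Phi_t$ ($\tau$ acting as $x\mapsto x^q$). $\mathrm{Der}(\phi,\psi)$: $\mathbb F_q$-linear $\delta:\mathbb F_q[t]\to K\{\tau\}$ with $\delta(ab)=\psi_a\delta(b)+\delta(a)\phi_b$, determined by $\delta(t)$; inner: $\delta^{(U)}(a)=U\phi_a-\psi_aU$. $\operatorname{Ext}^1_\tau(\phi,\psi)=\mathrm{Der}(\phi,\psi)/\mathrm{Der}_{in}(\phi,\psi)$ with $a*[\delta]=[\psi_a\delta]$; each class contains exactly one $\delta$ with $\deg_\tau\delta(t)<\operatorname{rk}\phi$. $\mathrm{Der}_0(\phi,\psi)=\{\delta\in\mathrm{Der}(\phi,\psi)\mid \delta(t)\text{ has zero constant term}\}$ and $\operatorname{Ext}^1_{0,\tau}(\phi,\psi)=\mathrm{Der}_0(\phi,\psi)/(\mathrm{Der}_0(\phi,\psi)\cap\mathrm{Der}_{in}(\phi,\psi))$, with the same module structure. *)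

theory Defs
  imports "HOL-Computational_Algebra.Computational_Algebra"
begin

text \<open>Fq q is the set of roots of x^q - x in K, which is the copy of F_q in K
  (the theorem assumes it has exactly q elements).
  Elements of A = F_q[t] are represented as 'k poly whose coefficients lie in Fq q;
  the variable t is [:0,1:].\<close>

definition Fq :: "nat \<Rightarrow> 'k::field set" where
  "Fq q = {x. x ^ q = x}"

definition Apoly :: "nat \<Rightarrow> 'k::field poly set" where
  "Apoly q = {a. \<forall>i. coeff a i \<in> Fq q}"

abbreviation tvar :: "'k::field poly" where
  "tvar \<equiv> [:0, 1:]"

text \<open>An element sum c_i tau^i of K{tau} is represented by the 'k poly with coeff i = c_i.
  Addition is polynomial addition; multiplication is twisted: tau x = x^q tau.\<close>

definition tmul :: "nat \<Rightarrow> 'k::field poly \<Rightarrow> 'k poly \<Rightarrow> 'k poly" where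
  "tmul q f g = (\<Sum>i\<le>degree f. \<Sum>j\<le>degree g. monom (coeff f i * coeff g j ^ (q ^ i)) (i + j))"

definition tev :: "nat \<Rightarrow> 'k::field poly \<Rightarrow> 'k \<Rightarrow> 'k" where
  "tev q f x = (\<Sum>k\<le>degree f. coeff f k * x ^ (q ^ k))"

section \<open>Matrices over K{tau} and over K (indices < d, zero outside)\<close>

definition is_tmat :: "nat \<Rightarrow> (nat \<Rightarrow> nat \<Rightarrow> 'k::field poly) \<Rightarrow> bool" where
  "is_tmat d M \<longleftrightarrow> (\<forall>i j. (d \<le> i \<or> d \<le> j) \<longrightarrow> M i j = 0)"

definition tmat_mul :: "nat \<Rightarrow> nat \<Rightarrow> (nat \<Rightarrow> nat \<Rightarrow> 'k::field poly) \<Rightarrow> (nat \<Rightarrow> nat \<Rightarrow> 'k poly)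
    \<Rightarrow> (nat \<Rightarrow> nat \<Rightarrow> 'k poly)" where
  "tmat_mul q d M N = (\<lambda>i j. \<Sum>k<d. tmul q (M i k) (N k j))"

definition tmat_one :: "nat \<Rightarrow> (nat \<Rightarrow> nat \<Rightarrow> 'k::field poly)" where
  "tmat_one d = (\<lambda>i j. if i = j \<and> i < d then 1 else 0)"

definition kmat_mul :: "nat \<Rightarrow> (nat \<Rightarrow> nat \<Rightarrow> 'k::field) \<Rightarrow> (nat \<Rightarrow> nat \<Rightarrow> 'k) \<Rightarrow> (nat \<Rightarrow> nat \<Rightarrow> 'k)" where
  "kmat_mul d M N = (\<lambda>i j. \<Sum>k<d. M i k * N k j)"

definition kmat_one :: "nat \<Rightarrow> (nat \<Rightarrow> nat \<Rightarrow> 'k::field)" where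
  "kmat_one d = (\<lambda>i j. if i = j \<and> i < d then 1 else 0)"

definition nilpotent_kmat :: "nat \<Rightarrow> (nat \<Rightarrow> nat \<Rightarrow> 'k::field) \<Rightarrow> bool" where
  "nilpotent_kmat d N \<longleftrightarrow> (\<exists>k. \<forall>i<d. \<forall>j<d. ((kmat_mul d N) ^^ k) (kmat_one d) i j = 0)"

definition t_module :: "nat \<Rightarrow> 'k::field \<Rightarrow> nat \<Rightarrow> ('k poly \<Rightarrow> nat \<Rightarrow> nat \<Rightarrow> 'k poly) \<Rightarrow> bool" where
  "t_module q \<theta> d \<Phi> \<longleftrightarrow>
     (\<forall>a\<in>Apoly q. is_tmat d (\<Phi> a)) \<and>
     \<Phi> 1 = tmat_one d \<and>
     (\<forall>a\<in>Apoly q. \<forall>b\<in>Apoly q. \<Phi> (a + b) = (\<lambda>i j. \<Phi> a i j + \<Phi> b i j)) \<and>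
     (\<forall>a\<in>Apoly q. \<forall>b\<in>Apoly q. \<Phi> (a * b) = tmat_mul q d (\<Phi> a) (\<Phi> b)) \<and>
     (\<forall>c\<in>Fq q. \<forall>a\<in>Apoly q. \<Phi> (smult c a) = (\<lambda>i j. smult c (\<Phi> a i j))) \<and>
     nilpotent_kmat d (\<lambda>i j. coeff (\<Phi> tvar i j) 0 - (if i = j then \<theta> else 0))"

text \<open>Drinfeld module = t-module of dimension one; stated directly with values in K{tau}.
  (A 1x1 nilpotent matrix is 0, so the condition is: constant term of phi_t is theta.)\<close>

definition drinfeld_module :: "nat \<Rightarrow> 'k::field \<Rightarrow> ('k poly \<Rightarrow> 'k poly) \<Rightarrow> bool" where
  "drinfeld_module q \<theta> \<phi> \<longleftrightarrow>
     \<phi> 1 = 1 \<and>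
     (\<forall>a\<in>Apoly q. \<forall>b\<in>Apoly q. \<phi> (a + b) = \<phi> a + \<phi> b) \<and>
     (\<forall>a\<in>Apoly q. \<forall>b\<in>Apoly q. \<phi> (a * b) = tmul q (\<phi> a) (\<phi> b)) \<and>
     (\<forall>c\<in>Fq q. \<forall>a\<in>Apoly q. \<phi> (smult c a) = smult c (\<phi> a)) \<and>
     coeff (\<phi> tvar) 0 = \<theta>"

definition rk :: "('k::field poly \<Rightarrow> 'k poly) \<Rightarrow> nat" where
  "rk \<phi> = degree (\<phi> tvar)"

section \<open>Mordell-Weil module of a t-module: K^d (vectors zero outside indices < d)\<close>

definition Kvec :: "nat \<Rightarrow> (nat \<Rightarrow> 'k::field) set" where
  "Kvec d = {x. \<forall>i. d \<le> i \<longrightarrow> x i = 0}"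

definition mw_add :: "(nat \<Rightarrow> 'k::field) \<Rightarrow> (nat \<Rightarrow> 'k) \<Rightarrow> (nat \<Rightarrow> 'k)" where
  "mw_add x y = (\<lambda>i. x i + y i)"

definition mw_act :: "nat \<Rightarrow> nat \<Rightarrow> ('k::field poly \<Rightarrow> nat \<Rightarrow> nat \<Rightarrow> 'k poly) \<Rightarrow> 'k poly
    \<Rightarrow> (nat \<Rightarrow> 'k) \<Rightarrow> (nat \<Rightarrow> 'k)" where
  "mw_act q d \<Phi> a x = (\<lambda>i. if i < d then (\<Sum>j<d. tev q (\<Phi> a i j) (x j)) else 0)"

text \<open>Derivations are maps A \<rightarrow> K{tau}; represented as functions on 'k poly that vanish outside A.\<close>

definition Der :: "nat \<Rightarrow> ('k::field poly \<Rightarrow> 'k poly) \<Rightarrow> ('k poly \<Rightarrow> 'k poly) \<Rightarrow> ('k poly \<Rightarrow> 'k poly) set" where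
  "Der q \<phi> \<psi> = {\<delta>.
     (\<forall>a\<in>Apoly q. \<forall>b\<in>Apoly q. \<delta> (a + b) = \<delta> a + \<delta> b) \<and>
     (\<forall>c\<in>Fq q. \<forall>a\<in>Apoly q. \<delta> (smult c a) = smult c (\<delta> a)) \<and>
     (\<forall>a\<in>Apoly q. \<forall>b\<in>Apoly q. \<delta> (a * b) = tmul q (\<psi> a) (\<delta> b) + tmul q (\<delta> a) (\<phi> b)) \<and>
     (\<forall>a. a \<notin> Apoly q \<longrightarrow> \<delta> a = 0)}"

definition inner_der :: "nat \<Rightarrow> ('k::field poly \<Rightarrow> 'k poly) \<Rightarrow> ('k poly \<Rightarrow> 'k poly) \<Rightarrow> 'k poly
    \<Rightarrow> ('k poly \<Rightarrow> 'k poly)" where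
  "inner_der q \<phi> \<psi> U = (\<lambda>a. if a \<in> Apoly q then tmul q U (\<phi> a) - tmul q (\<psi> a) U else 0)"

definition Der_in :: "nat \<Rightarrow> ('k::field poly \<Rightarrow> 'k poly) \<Rightarrow> ('k poly \<Rightarrow> 'k poly) \<Rightarrow> ('k poly \<Rightarrow> 'k poly) set" where
  "Der_in q \<phi> \<psi> = range (inner_der q \<phi> \<psi>)"

definition Der0 :: "nat \<Rightarrow> ('k::field poly \<Rightarrow> 'k poly) \<Rightarrow> ('k poly \<Rightarrow> 'k poly) \<Rightarrow> ('k poly \<Rightarrow> 'k poly) set" where
  "Der0 q \<phi> \<psi> = {\<delta> \<in> Der q \<phi> \<psi>. coeff (\<delta> tvar) 0 = 0}"

definition ext_rel :: "nat \<Rightarrow> ('k::field poly \<Rightarrow> 'k poly) \<Rightarrow> ('k poly \<Rightarrow> 'k poly)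
    \<Rightarrow> ('k poly \<Rightarrow> 'k poly) set \<Rightarrow> (('k poly \<Rightarrow> 'k poly) \<times> ('k poly \<Rightarrow> 'k poly)) set" where
  "ext_rel q \<phi> \<psi> D = {(\<delta>, \<delta>'). \<delta> \<in> D \<and> \<delta>' \<in> D \<and> (\<lambda>a. \<delta> a - \<delta>' a) \<in> D \<inter> Der_in q \<phi> \<psi>}"

definition ext_cls :: "nat \<Rightarrow> ('k::field poly \<Rightarrow> 'k poly) \<Rightarrow> ('k poly \<Rightarrow> 'k poly)
    \<Rightarrow> ('k poly \<Rightarrow> 'k poly) set \<Rightarrow> ('k poly \<Rightarrow> 'k poly) \<Rightarrow> ('k poly \<Rightarrow> 'k poly) set" where
  "ext_cls q \<phi> \<psi> D \<delta> = ext_rel q \<phi> \<psi> D `` {\<delta>}"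

definition Ext1 :: "nat \<Rightarrow> ('k::field poly \<Rightarrow> 'k poly) \<Rightarrow> ('k poly \<Rightarrow> 'k poly) \<Rightarrow> ('k poly \<Rightarrow> 'k poly) set set" where
  "Ext1 q \<phi> \<psi> = Der q \<phi> \<psi> // ext_rel q \<phi> \<psi> (Der q \<phi> \<psi>)"

definition Ext1_0 :: "nat \<Rightarrow> ('k::field poly \<Rightarrow> 'k poly) \<Rightarrow> ('k poly \<Rightarrow> 'k poly) \<Rightarrow> ('k poly \<Rightarrow> 'k poly) set set" where
  "Ext1_0 q \<phi> \<psi> = Der0 q \<phi> \<psi> // ext_rel q \<phi> \<psi> (Der0 q \<phi> \<psi>)"

definition rep :: "('k poly \<Rightarrow> 'k poly) set \<Rightarrow> ('k poly \<Rightarrow> 'k poly)" where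
  "rep X = (SOME \<delta>. \<delta> \<in> X)"

definition ext_add :: "nat \<Rightarrow> ('k::field poly \<Rightarrow> 'k poly) \<Rightarrow> ('k poly \<Rightarrow> 'k poly) \<Rightarrow> ('k poly \<Rightarrow> 'k poly) set
    \<Rightarrow> ('k poly \<Rightarrow> 'k poly) set \<Rightarrow> ('k poly \<Rightarrow> 'k poly) set \<Rightarrow> ('k poly \<Rightarrow> 'k poly) set" where
  "ext_add q \<phi> \<psi> D X Y = ext_cls q \<phi> \<psi> D (\<lambda>b. rep X b + rep Y b)"

definition ext_act :: "nat \<Rightarrow> ('k::field poly \<Rightarrow> 'k poly) \<Rightarrow> ('k poly \<Rightarrow> 'k poly) \<Rightarrow> ('k poly \<Rightarrow> 'k poly) set
    \<Rightarrow> 'k poly \<Rightarrow> ('k poly \<Rightarrow> 'k poly) set \<Rightarrow> ('k poly \<Rightarrow> 'k poly) set" where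
  "ext_act q \<phi> \<psi> D a X = ext_cls q \<phi> \<psi> D (\<lambda>b. tmul q (\<psi> a) (rep X b))"

definition der_of :: "nat \<Rightarrow> ('k::field poly \<Rightarrow> 'k poly) \<Rightarrow> ('k poly \<Rightarrow> 'k poly) \<Rightarrow> 'k poly
    \<Rightarrow> ('k poly \<Rightarrow> 'k poly)" where
  "der_of q \<phi> \<psi> w = (THE \<delta>. \<delta> \<in> Der q \<phi> \<psi> \<and> \<delta> tvar = w)"

definition Tlt :: "nat \<Rightarrow> 'k::field poly set" where
  "Tlt n = {w. degree w < n}"

definition T1n :: "nat \<Rightarrow> 'k::field poly set" where
  "T1n n = {w. degree w < n \<and> coeff w 0 = 0}"

definition ext_of :: "nat \<Rightarrow> ('k::field poly \<Rightarrow> 'k poly) \<Rightarrow> ('k poly \<Rightarrow> 'k poly) \<Rightarrow> 'k poly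
    \<Rightarrow> ('k poly \<Rightarrow> 'k poly) set" where
  "ext_of q \<phi> \<psi> w = ext_cls q \<phi> \<psi> (Der q \<phi> \<psi>) (der_of q \<phi> \<psi> w)"

definition trans_add :: "nat \<Rightarrow> ('k::field poly \<Rightarrow> 'k poly) \<Rightarrow> ('k poly \<Rightarrow> 'k poly) \<Rightarrow> 'k poly \<Rightarrow> 'k poly \<Rightarrow> 'k poly" where
  "trans_add q \<phi> \<psi> v w = inv_into (Tlt (rk \<phi>)) (ext_of q \<phi> \<psi>)
      (ext_add q \<phi> \<psi> (Der q \<phi> \<psi>) (ext_of q \<phi> \<psi> v) (ext_of q \<phi> \<psi> w))"

definition trans_act :: "nat \<Rightarrow> ('k::field poly \<Rightarrow> 'k poly) \<Rightarrow> ('k poly \<Rightarrow> 'k poly) \<Rightarrow> 'k poly \<Rightarrow> 'k poly \<Rightarrow> 'k poly" where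
  "trans_act q \<phi> \<psi> a w = inv_into (Tlt (rk \<phi>)) (ext_of q \<phi> \<psi>)
      (ext_act q \<phi> \<psi> (Der q \<phi> \<psi>) a (ext_of q \<phi> \<psi> w))"

end

theory Submission
  imports Defs
begin

definition bisum :: "nat \<Rightarrow> nat \<Rightarrow> (nat \<Rightarrow> nat \<Rightarrow> 'a::comm_monoid_add) \<Rightarrow> 'a poly" where
  "bisum A B F = (\<Sum>i\<le>A. \<Sum>j\<le>B. monom (F i j) (i + j))"

lemma coeff_bisum: "coeff (bisum A B F) k = (\<Sum>i\<le>A. \<Sum>j\<le>B. if i + j = k then F i j else 0)"
  unfolding bisum_def by (simp add: coeff_sum)

lemma coeff_bisum_gt: "A + B < k \<Longrightarrow> coeff (bisum A B F) k = 0"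
  unfolding coeff_bisum by (intro sum.neutral ballI) auto

lemma coeff_bisum_top: "coeff (bisum A B F) (A + B) = F A B"
proof -
  have "coeff (bisum A B F) (A + B) = (\<Sum>i\<le>A. \<Sum>j\<le>B. if i + j = A + B then F i j else 0)"
    by (rule coeff_bisum)
  also have "\<dots> = (\<Sum>i\<le>A. if i = A then F A B else 0)"
  proof (intro sum.cong refl)
    fix i assume i: "i \<in> {..A}"
    show "(\<Sum>j\<le>B. if i + j = A + B then F i j else 0) = (if i = A then F A B else 0)"
    proof (cases "i = A")
      case True
      then show ?thesis by (simp add: sum.delta'[of "{..B}" B "F A", simplified] if_distrib cong: if_cong)
    next
      case False
      with i have "i < A" by auto
      then show ?thesis by (intro trans[OF sum.neutral]) auto
    qed
  qed
  also have "\<dots> = F A B" by simp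
  finally show ?thesis .
qed

lemma coeff_bisum_0: "coeff (bisum A B F) 0 = F 0 0"
proof -
  have "coeff (bisum A B F) 0 = (\<Sum>i\<le>A. \<Sum>j\<le>B. if i + j = 0 then F i j else 0)"
    by (rule coeff_bisum)
  also have "\<dots> = (\<Sum>i\<le>A. if i = 0 then F 0 0 else 0)"
    by (intro sum.cong refl) (auto simp: sum.delta)
  also have "\<dots> = F 0 0" by simp
  finally show ?thesis .
qed

lemma bisum_ext:
  assumes "A \<le> A'" "B \<le> B'" "\<And>i j. i > A \<or> j > B \<Longrightarrow> F i j = 0"
  shows "bisum A' B' F = bisum A B F"
proof -
  have "bisum A' B' F = (\<Sum>i\<le>A. \<Sum>j\<le>B'. monom (F i j) (i + j))"
    unfolding bisum_def using assms by (intro sum.mono_neutral_right) (auto intro!: sum.neutral)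
  also have "\<dots> = bisum A B F"
    unfolding bisum_def using assms by (intro sum.cong refl sum.mono_neutral_right) auto
  finally show ?thesis .
qed

locale DM =
  fixes q m :: nat and \<theta> :: "'k::field" and \<phi> \<psi> :: "'k poly \<Rightarrow> 'k poly"
  assumes charp: "prime CHAR('k)" and mpos: "0 < m" and qdef: "q = CHAR('k) ^ m"
    and dphi: "drinfeld_module q \<theta> \<phi>" and dpsi: "drinfeld_module q \<theta> \<psi>"
    and rklt: "rk \<psi> < rk \<phi>"
begin

lemma q_ge2: "2 \<le> q"
proof -
  have "2 \<le> CHAR('k)" using charp prime_ge_2_nat by blast
  moreover have "CHAR('k) ^ 1 \<le> CHAR('k) ^ m" using mpos \<open>2 \<le> CHAR('k)\<close>
    by (intro power_increasing) auto
  ultimately show ?thesis using qdef by simp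
qed

lemma qpow_pos: "0 < q ^ k" using q_ge2 by simp

lemma qpow_eq: "q ^ k = CHAR('k) ^ (m * k)"
  by (simp add: qdef power_mult)

lemma frob_add: "(x + y :: 'k) ^ (q ^ k) = x ^ (q ^ k) + y ^ (q ^ k)"
  unfolding qpow_eq by (rule freshmans_dream'[OF charp]) simp

lemma frob_sum: "(sum f A :: 'k) ^ (q ^ k) = (\<Sum>i\<in>A. f i ^ (q ^ k))"
  unfolding qpow_eq by (rule freshmans_dream_sum'[OF charp]) simp

lemma charp_poly: "prime CHAR('k poly)" using charp by simp

lemma frob_add_poly: "(x + y :: 'k poly) ^ (q ^ k) = x ^ (q ^ k) + y ^ (q ^ k)"
  unfolding qpow_eq by (rule freshmans_dream'[OF charp_poly]) simp

lemma frob_sum_poly: "(sum f A :: 'k poly) ^ (q ^ k) = (\<Sum>i\<in>A. f i ^ (q ^ k))"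
  unfolding qpow_eq by (rule freshmans_dream_sum'[OF charp_poly]) simp

lemma frob_minus: "(- x :: 'k) ^ (q ^ k) = - (x ^ (q ^ k))"
proof -
  have "(x + - x) ^ (q ^ k) = x ^ (q ^ k) + (- x) ^ (q ^ k)" by (rule frob_add)
  moreover have "(0::'k) ^ (q ^ k) = 0" using qpow_pos[of k] by simp
  ultimately have "0 = x ^ (q ^ k) + (- x) ^ (q ^ k)" by simp
  thus ?thesis by (simp add: eq_neg_iff_add_eq_0 add.commute)
qed

lemma frob_diff: "(x - y :: 'k) ^ (q ^ k) = x ^ (q ^ k) - y ^ (q ^ k)"
  using frob_add[of x "-y" k] frob_minus[of y k] by simp

lemma Fq_pow: "(c::'k) \<in> Fq q \<Longrightarrow> c ^ (q ^ k) = c"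
proof (induction k)
  case 0 then show ?case by simp
next
  case (Suc k)
  have "c ^ (q ^ Suc k) = (c ^ q) ^ (q ^ k)" by (simp add: power_mult[symmetric] mult.commute)
  also have "c ^ q = c" using Suc.prems by (simp add: Fq_def)
  finally show ?case using Suc by simp
qed

lemma Fq_0: "(0::'k) \<in> Fq q" using q_ge2 by (simp add: Fq_def)
lemma Fq_1: "(1::'k) \<in> Fq q" by (simp add: Fq_def)
lemma Fq_add: "(c::'k) \<in> Fq q \<Longrightarrow> d \<in> Fq q \<Longrightarrow> c + d \<in> Fq q"
  using frob_add[of c d 1] by (simp add: Fq_def)
lemma Fq_mult: "(c::'k) \<in> Fq q \<Longrightarrow> d \<in> Fq q \<Longrightarrow> c * d \<in> Fq q"
  by (simp add: Fq_def power_mult_distrib)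
lemma Fq_uminus: "(c::'k) \<in> Fq q \<Longrightarrow> - c \<in> Fq q"
  using frob_minus[of c 1] by (simp add: Fq_def)
lemma Fq_sum: "(\<And>i. i \<in> A \<Longrightarrow> f i \<in> Fq q) \<Longrightarrow> (sum f A::'k) \<in> Fq q"
  by (induction A rule: infinite_finite_induct) (auto simp: Fq_0 Fq_add)

lemma Apoly_pCons: "pCons (c::'k) a \<in> Apoly q \<longleftrightarrow> c \<in> Fq q \<and> a \<in> Apoly q"
  unfolding Apoly_def mem_Collect_eq
proof
  assume "\<forall>i. coeff (pCons c a) i \<in> Fq q"
  then show "c \<in> Fq q \<and> (\<forall>i. coeff a i \<in> Fq q)" by (metis coeff_pCons_0 coeff_pCons_Suc)
next
  assume "c \<in> Fq q \<and> (\<forall>i. coeff a i \<in> Fq q)"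
  then show "\<forall>i. coeff (pCons c a) i \<in> Fq q" by (simp add: coeff_pCons')
qed

lemma Apoly_0: "(0::'k poly) \<in> Apoly q" by (simp add: Apoly_def Fq_0)
lemma Apoly_1: "(1::'k poly) \<in> Apoly q" by (simp add: Apoly_def Fq_0 Fq_1 coeff_1)
lemma Apoly_t: "(tvar::'k poly) \<in> Apoly q" by (simp add: Apoly_def Fq_0 Fq_1 coeff_pCons')
lemma Apoly_const: "(c::'k) \<in> Fq q \<Longrightarrow> [:c:] \<in> Apoly q" by (simp add: Apoly_pCons Apoly_0)
lemma Apoly_add: "(a::'k poly) \<in> Apoly q \<Longrightarrow> b \<in> Apoly q \<Longrightarrow> a + b \<in> Apoly q"
  by (simp add: Apoly_def Fq_add)
lemma Apoly_uminus: "(a::'k poly) \<in> Apoly q \<Longrightarrow> - a \<in> Apoly q"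
  by (simp add: Apoly_def Fq_uminus)
lemma Apoly_mult: "(a::'k poly) \<in> Apoly q \<Longrightarrow> b \<in> Apoly q \<Longrightarrow> a * b \<in> Apoly q"
  unfolding Apoly_def by (auto simp: coeff_mult intro!: Fq_sum Fq_mult)
lemma Apoly_smult: "(c::'k) \<in> Fq q \<Longrightarrow> a \<in> Apoly q \<Longrightarrow> smult c a \<in> Apoly q"
  by (simp add: Apoly_def Fq_mult)

lemma Apoly_induct[consumes 1, case_names 0 pCons]:
  assumes "(a::'k poly) \<in> Apoly q" "P 0" "\<And>c a. c \<in> Fq q \<Longrightarrow> a \<in> Apoly q \<Longrightarrow> P a \<Longrightarrow> P (pCons c a)"
  shows "P a"
  using assms(1)
proof (induction a)
  case 0 then show ?case using assms(2) by simp
next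
  case (pCons c a)
  then show ?case using assms(3) Apoly_pCons by blast
qed

lemma pCons_as_sum: "pCons c a = [:c:] + tvar * a"
  by simp

end

lemma smult_sum_right: "smult c (\<Sum>i\<in>A. f i) = (\<Sum>i\<in>A. smult c (f i))"
  by (induction A rule: infinite_finite_induct) (auto simp: smult_add_right)

lemma const_power: "[:x:] ^ n = [:x ^ n:]"
  by (induction n) (auto simp: one_pCons mult.commute)

lemma const_sum: "(\<Sum>i\<in>A. [:f i:]) = [:\<Sum>i\<in>A. f i:]"
  by (induction A rule: infinite_finite_induct) auto

context DM begin

abbreviation TM :: "'k poly \<Rightarrow> 'k poly \<Rightarrow> 'k poly" where "TM \<equiv> tmul q"
abbreviation TE :: "'k poly \<Rightarrow> 'k \<Rightarrow> 'k" where "TE \<equiv> tev q"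

lemma zpow: "(0::'a::semiring_1) ^ (q ^ k) = 0"
  using qpow_pos[of k] by (simp add: power_0_left)

definition Tev :: "'k poly \<Rightarrow> 'k poly \<Rightarrow> 'k poly" where
  "Tev f v = (\<Sum>k\<le>degree f. smult (coeff f k) (v ^ (q ^ k)))"

lemma Tev_bound: "degree f \<le> N \<Longrightarrow> Tev f v = (\<Sum>k\<le>N. smult (coeff f k) (v ^ (q ^ k)))"
  unfolding Tev_def by (intro sum.mono_neutral_left) (auto simp: coeff_eq_0)

lemma Tev_add: "Tev (f + g) v = Tev f v + Tev g v"
proof -
  let ?N = "max (degree f) (degree g)"
  have "Tev (f + g) v = (\<Sum>k\<le>?N. smult (coeff (f + g) k) (v ^ (q ^ k)))"
    by (rule Tev_bound) (simp add: degree_add_le)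
  also have "\<dots> = (\<Sum>k\<le>?N. smult (coeff f k) (v ^ (q ^ k))) + (\<Sum>k\<le>?N. smult (coeff g k) (v ^ (q ^ k)))"
    by (simp add: smult_add_left sum.distrib)
  also have "\<dots> = Tev f v + Tev g v" using Tev_bound[of f ?N v] Tev_bound[of g ?N v] by simp
  finally show ?thesis .
qed

lemma Tev_0 [simp]: "Tev 0 v = 0" by (simp add: Tev_def)

lemma Tev_sum: "Tev (\<Sum>i\<in>A. f i) v = (\<Sum>i\<in>A. Tev (f i) v)"
  by (induction A rule: infinite_finite_induct) (auto simp: Tev_add)

lemma Tev_monom: "Tev (monom c k) v = smult c (v ^ (q ^ k))"
proof (cases "c = 0")
  case True then show ?thesis by simp
next
  case False
  have "Tev (monom c k) v = (\<Sum>j\<le>k. smult (coeff (monom c k) j) (v ^ (q ^ j)))"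
    by (rule Tev_bound) (simp add: degree_monom_le)
  also have "\<dots> = (\<Sum>j\<le>k. if j = k then smult c (v ^ (q ^ k)) else 0)"
    by (intro sum.cong) auto
  also have "\<dots> = smult c (v ^ (q ^ k))" by simp
  finally show ?thesis .
qed

lemma Tev_smult: "Tev (smult c f) v = smult c (Tev f v)"
proof -
  have "Tev (smult c f) v = (\<Sum>k\<le>degree f. smult (coeff (smult c f) k) (v ^ (q ^ k)))"
    by (rule Tev_bound) (simp add: degree_smult_le)
  also have "\<dots> = smult c (Tev f v)" by (simp add: Tev_def smult_sum_right)
  finally show ?thesis .
qed

lemma Tev_addv: "Tev f (v + w) = Tev f v + Tev f w"
  by (simp add: Tev_def frob_add_poly smult_add_right sum.distrib)

lemma Tev_0v [simp]: "Tev f 0 = 0"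
  by (simp add: Tev_def zpow)

lemma Tev_sumv: "Tev f (\<Sum>i\<in>A. v i) = (\<Sum>i\<in>A. Tev f (v i))"
  by (induction A rule: infinite_finite_induct) (auto simp: Tev_addv)

lemma Tev_smultv: "c \<in> Fq q \<Longrightarrow> Tev f (smult c v) = smult c (Tev f v)"
  by (simp add: Tev_def smult_power Fq_pow smult_sum_right mult.commute)

lemma tmul_bisum: "TM f g = bisum (degree f) (degree g) (\<lambda>i j. coeff f i * coeff g j ^ (q ^ i))"
  by (simp add: tmul_def bisum_def)

lemma tmul_bisum_ext:
  assumes "degree f \<le> A" "degree g \<le> B"
  shows "TM f g = bisum A B (\<lambda>i j. coeff f i * coeff g j ^ (q ^ i))"
  unfolding tmul_bisum using assms qpow_pos
  by (intro bisum_ext[symmetric]) (auto simp: coeff_eq_0)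

lemma Tev_bisum: "Tev (bisum A B F) v = (\<Sum>i\<le>A. \<Sum>j\<le>B. smult (F i j) (v ^ (q ^ (i + j))))"
  by (simp add: bisum_def Tev_sum Tev_monom)

lemma Tev_tmul: "Tev (TM f g) v = Tev f (Tev g v)"
proof -
  have "Tev f (Tev g v) = (\<Sum>i\<le>degree f. smult (coeff f i)
          ((\<Sum>j\<le>degree g. smult (coeff g j) (v ^ (q ^ j))) ^ (q ^ i)))"
    by (simp add: Tev_def)
  also have "\<dots> = (\<Sum>i\<le>degree f. \<Sum>j\<le>degree g. smult (coeff f i * coeff g j ^ (q ^ i)) (v ^ (q ^ (i + j))))"
  proof (intro sum.cong refl)
    fix i
    have pw: "(v ^ (q ^ j)) ^ (q ^ i) = v ^ (q ^ (i + j))" for j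
      by (simp add: power_mult[symmetric] power_add mult.commute)
    have "(\<Sum>j\<le>degree g. smult (coeff g j) (v ^ (q ^ j))) ^ (q ^ i)
        = (\<Sum>j\<le>degree g. (smult (coeff g j) (v ^ (q ^ j))) ^ (q ^ i))"
      by (rule frob_sum_poly)
    also have "\<dots> = (\<Sum>j\<le>degree g. smult (coeff g j ^ (q ^ i)) (v ^ (q ^ (i + j))))"
      by (simp only: smult_power pw)
    finally show "smult (coeff f i) ((\<Sum>j\<le>degree g. smult (coeff g j) (v ^ (q ^ j))) ^ (q ^ i))
       = (\<Sum>j\<le>degree g. smult (coeff f i * coeff g j ^ (q ^ i)) (v ^ (q ^ (i + j))))"
      by (simp add: smult_sum_right)
  qed
  also have "\<dots> = Tev (TM f g) v"
    by (simp add: tmul_bisum Tev_bisum)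
  finally show ?thesis by simp
qed

lemma Tev_X: "Tev f [:0, 1:] = (\<Sum>k\<le>degree f. monom (coeff f k) (q ^ k))"
  by (simp add: Tev_def monom_altdef)

lemma coeff_Tev_X: "coeff (Tev f [:0, 1:]) (q ^ k) = coeff f k"
proof -
  have inj: "q ^ j = q ^ k \<longleftrightarrow> j = k" for j
    using q_ge2 by (simp add: power_inject_exp)
  have "coeff (Tev f [:0, 1:]) (q ^ k) = (\<Sum>j\<le>degree f. if j = k then coeff f j else 0)"
    by (simp add: Tev_X coeff_sum inj eq_commute)
  also have "\<dots> = coeff f k" by (auto simp: coeff_eq_0)
  finally show ?thesis .
qed

lemma Tev_inj: "(\<And>v. Tev f v = Tev g v) \<Longrightarrow> f = g"
  by (rule poly_eqI) (metis coeff_Tev_X)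

lemma tmul_assoc: "TM (TM f g) h = TM f (TM g h)"
  by (rule Tev_inj) (simp add: Tev_tmul)

lemma tmul_add_left: "TM (f + g) h = TM f h + TM g h"
  by (rule Tev_inj) (simp add: Tev_tmul Tev_add)

lemma tmul_add_right: "TM f (g + h) = TM f g + TM f h"
  by (rule Tev_inj) (simp add: Tev_tmul Tev_add Tev_addv)

lemma tmul_0_left [simp]: "TM 0 f = 0"
  by (rule Tev_inj) (simp add: Tev_tmul)

lemma tmul_0_right [simp]: "TM f 0 = 0"
  by (rule Tev_inj) (simp add: Tev_tmul)

lemma Tev_const: "Tev [:c:] v = smult c v"
  using Tev_monom[of c 0 v] by (simp add: monom_0)

lemma Tev_1: "Tev 1 v = v"
  using Tev_const[of 1 v] by (simp add: one_pCons)

lemma tmul_const_left: "TM [:c:] f = smult c f"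
  by (rule Tev_inj) (simp add: Tev_tmul Tev_const Tev_smult)

lemma tmul_const_right: "c \<in> Fq q \<Longrightarrow> TM f [:c:] = smult c f"
  by (rule Tev_inj) (simp add: Tev_tmul Tev_const Tev_smult Tev_smultv)

lemma tmul_1_left [simp]: "TM 1 f = f"
  using tmul_const_left[of 1 f] by (simp add: one_pCons)

lemma tmul_1_right [simp]: "TM f 1 = f"
  using tmul_const_right[of 1 f] Fq_1 by (simp add: one_pCons)

lemma tmul_smult_left: "TM (smult c f) g = smult c (TM f g)"
  by (rule Tev_inj) (simp add: Tev_tmul Tev_smult)

lemma tmul_smult_right: "c \<in> Fq q \<Longrightarrow> TM f (smult c g) = smult c (TM f g)"
  by (rule Tev_inj) (simp add: Tev_tmul Tev_smult Tev_smultv)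

lemma tmul_minus_left: "TM (- f) g = - TM f g"
  using tmul_add_left[of f "-f" g] by (simp add: eq_neg_iff_add_eq_0 add.commute)

lemma tmul_minus_right: "TM f (- g) = - TM f g"
  using tmul_add_right[of f g "-g"] by (simp add: eq_neg_iff_add_eq_0 add.commute)

lemma tmul_diff_left: "TM (f - g) h = TM f h - TM g h"
  using tmul_add_left[of f "-g" h] by (simp add: tmul_minus_left)

lemma tmul_diff_right: "TM f (g - h) = TM f g - TM f h"
  using tmul_add_right[of f g "-h"] by (simp add: tmul_minus_right)

lemma tmul_sum_left: "TM (\<Sum>i\<in>A. f i) h = (\<Sum>i\<in>A. TM (f i) h)"
  by (induction A rule: infinite_finite_induct) (auto simp: tmul_add_left)

lemma tmul_sum_right: "TM h (\<Sum>i\<in>A. f i) = (\<Sum>i\<in>A. TM h (f i))"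
  by (induction A rule: infinite_finite_induct) (auto simp: tmul_add_right)

lemma coeff_tmul_0: "coeff (TM f g) 0 = coeff f 0 * coeff g 0"
  by (simp add: tmul_bisum coeff_bisum_0)

lemma coeff_tmul_gt: "degree f + degree g < k \<Longrightarrow> coeff (TM f g) k = 0"
  by (simp add: tmul_bisum coeff_bisum_gt)

lemma coeff_tmul_top: "coeff (TM f g) (degree f + degree g) = lead_coeff f * lead_coeff g ^ (q ^ degree f)"
  by (simp add: tmul_bisum coeff_bisum_top)

lemma coeff_tmul: "coeff (TM f g) k = (\<Sum>i\<le>degree f. \<Sum>j\<le>degree g. if i + j = k then coeff f i * coeff g j ^ (q ^ i) else 0)"
  by (simp add: tmul_bisum coeff_bisum)

lemma Tev_constv: "Tev f [:x:] = [:TE f x:]"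
  by (simp add: Tev_def tev_def const_power const_sum)

lemma tev_Tev: "TE f x = coeff (Tev f [:x:]) 0"
  by (simp add: Tev_constv)

lemma tev_tmul: "TE (TM f g) x = TE f (TE g x)"
proof -
  have "[:TE (TM f g) x:] = [:TE f (TE g x):]"
    by (metis Tev_constv Tev_tmul)
  thus ?thesis by simp
qed

lemma tev_add: "TE (f + g) x = TE f x + TE g x"
  by (simp add: tev_Tev Tev_add)

lemma tev_0 [simp]: "TE 0 x = 0"
  by (simp add: tev_Tev)

lemma tev_sum: "TE (\<Sum>i\<in>A. f i) x = (\<Sum>i\<in>A. TE (f i) x)"
  by (simp add: tev_Tev Tev_sum coeff_sum)

lemma tev_addx: "TE f (x + y) = TE f x + TE f y"
  using Tev_addv[of f "[:x:]" "[:y:]"] by (simp add: tev_Tev)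

lemma tev_0x [simp]: "TE f 0 = 0"
  by (simp add: tev_Tev)

lemma tev_sumx: "TE f (\<Sum>i\<in>A. x i) = (\<Sum>i\<in>A. TE f (x i))"
  using Tev_sumv[of f "\<lambda>i. [:x i:]" A] by (simp add: tev_Tev const_sum coeff_sum)

lemma tev_monom: "TE (monom c k) y = c * y ^ (q ^ k)"
  by (simp add: tev_Tev Tev_monom const_power)

lemma tev_const: "TE [:c:] y = c * y"
  by (simp add: tev_Tev Tev_const)

lemma tev_smult: "TE (smult c f) y = c * TE f y"
  by (simp add: tev_Tev Tev_smult)

lemma tev_smultx: "c \<in> Fq q \<Longrightarrow> TE f (c * y) = c * TE f y"
  using Tev_smultv[of c f "[:y:]"] by (simp add: tev_Tev)

end

fun dl :: "nat \<Rightarrow> ('k::field poly \<Rightarrow> 'k poly) \<Rightarrow> ('k poly \<Rightarrow> 'k poly) \<Rightarrow> 'k poly \<Rightarrow> 'k list \<Rightarrow> 'k poly" where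
  "dl q ph ps w [] = 0"
| "dl q ph ps w (c # cs) = tmul q (ps tvar) (dl q ph ps w cs) + tmul q w (ph (Poly cs))"

context DM begin

lemma dm_0: assumes "drinfeld_module q \<theta> g" shows "g 0 = 0"
proof -
  have "g (0 + 0) = g 0 + g 0" using assms Apoly_0 unfolding drinfeld_module_def by blast
  thus ?thesis by (metis add.right_neutral add_left_cancel)
qed

lemma dm_add: "drinfeld_module q \<theta> g \<Longrightarrow> a \<in> Apoly q \<Longrightarrow> b \<in> Apoly q \<Longrightarrow> g (a + b) = g a + g b"
  unfolding drinfeld_module_def by blast

lemma dm_mult: "drinfeld_module q \<theta> g \<Longrightarrow> a \<in> Apoly q \<Longrightarrow> b \<in> Apoly q \<Longrightarrow> g (a * b) = TM (g a) (g b)"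
  unfolding drinfeld_module_def by blast

lemma dm_smult: "drinfeld_module q \<theta> g \<Longrightarrow> c \<in> Fq q \<Longrightarrow> a \<in> Apoly q \<Longrightarrow> g (smult c a) = smult c (g a)"
  unfolding drinfeld_module_def by blast

lemma dm_1: "drinfeld_module q \<theta> g \<Longrightarrow> g 1 = 1"
  unfolding drinfeld_module_def by blast

lemma dm_const: assumes "drinfeld_module q \<theta> g" "c \<in> Fq q" shows "g [:c:] = [:c:]"
proof -
  have "g (smult c 1) = smult c (g 1)" using dm_smult[OF assms Apoly_1] .
  thus ?thesis using dm_1[OF assms(1)] by (simp add: one_pCons)
qed

lemma dm_pCons: assumes "drinfeld_module q \<theta> g" "c \<in> Fq q" "a \<in> Apoly q"
  shows "g (pCons c a) = [:c:] + TM (g tvar) (g a)"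
proof -
  have "g (pCons c a) = g ([:c:] + tvar * a)" by simp
  also have "\<dots> = g [:c:] + g (tvar * a)"
    using assms by (intro dm_add) (auto intro: Apoly_const simp: Apoly_pCons Fq_0 Apoly_0)
  also have "\<dots> = [:c:] + TM (g tvar) (g a)"
    using dm_mult[OF assms(1) Apoly_t assms(3)] dm_const[OF assms(1,2)] by simp
  finally show ?thesis .
qed

lemma dm_comm: "drinfeld_module q \<theta> g \<Longrightarrow> a \<in> Apoly q \<Longrightarrow> b \<in> Apoly q \<Longrightarrow> TM (g a) (g b) = TM (g b) (g a)"
  by (metis dm_mult mult.commute)

lemma dm_uminus: assumes "drinfeld_module q \<theta> g" "a \<in> Apoly q" shows "g (- a) = - g a"
proof -
  have "g (a + - a) = g a + g (- a)" using assms by (intro dm_add Apoly_uminus) auto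
  thus ?thesis using dm_0[OF assms(1)] by (simp add: eq_neg_iff_add_eq_0 add.commute)
qed

abbreviation "\<phi>t \<equiv> \<phi> tvar"
abbreviation "\<psi>t \<equiv> \<psi> tvar"

lemmas phi_0 = dm_0[OF dphi] and psi_0 = dm_0[OF dpsi]
lemmas phi_add = dm_add[OF dphi] and psi_add = dm_add[OF dpsi]
lemmas phi_mult = dm_mult[OF dphi] and psi_mult = dm_mult[OF dpsi]
lemmas phi_smult = dm_smult[OF dphi] and psi_smult = dm_smult[OF dpsi]
lemmas phi_pCons = dm_pCons[OF dphi] and psi_pCons = dm_pCons[OF dpsi]
lemmas phi_comm = dm_comm[OF dphi] and psi_comm = dm_comm[OF dpsi]
lemmas phi_1 = dm_1[OF dphi] and psi_1 = dm_1[OF dpsi]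

definition dv :: "'k poly \<Rightarrow> 'k poly \<Rightarrow> 'k poly" where
  "dv w a = dl q \<phi> \<psi> w (coeffs a)"

definition DV :: "'k poly \<Rightarrow> 'k poly \<Rightarrow> 'k poly" where
  "DV w = (\<lambda>a. if a \<in> Apoly q then dv w a else 0)"

lemma dv_0 [simp]: "dv w 0 = 0" by (simp add: dv_def)

lemma dv_pCons: "dv w (pCons c a) = TM \<psi>t (dv w a) + TM w (\<phi> a)"
proof (cases "c = 0 \<and> a = 0")
  case True then show ?thesis by (simp add: phi_0)
next
  case False
  then have "coeffs (pCons c a) = c # coeffs a" by (auto simp: cCons_def)
  then show ?thesis by (simp add: dv_def)
qed

lemma dv_const: "dv w [:c:] = 0"
  using dv_pCons[of w c 0] by (simp add: phi_0)

lemma dv_t: "dv w tvar = w"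
  using dv_pCons[of w 0 "[:1:]"] dv_const[of w 1] phi_1 tmul_const_right[OF Fq_1, of w] by (simp add: one_pCons)

lemma dv_add: "a \<in> Apoly q \<Longrightarrow> b \<in> Apoly q \<Longrightarrow> dv w (a + b) = dv w a + dv w b"
proof (induction a arbitrary: b rule: Apoly_induct)
  case 0 then show ?case by simp
next
  case (pCons c a)
  from pCons.prems obtain d b' where b: "b = pCons d b'" "d \<in> Fq q" "b' \<in> Apoly q"
    by (metis Apoly_pCons pCons_cases)
  have "dv w (pCons c a + b) = TM \<psi>t (dv w (a + b')) + TM w (\<phi> (a + b'))"
    by (simp add: b dv_pCons)
  also have "\<dots> = TM \<psi>t (dv w a + dv w b') + TM w (\<phi> a + \<phi> b')"
    using pCons b by (simp add: phi_add)
  also have "\<dots> = dv w (pCons c a) + dv w b"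
    by (simp add: b dv_pCons tmul_add_right algebra_simps)
  finally show ?case .
qed

lemma dv_smult: "a \<in> Apoly q \<Longrightarrow> c \<in> Fq q \<Longrightarrow> dv w (smult c a) = smult c (dv w a)"
proof (induction a rule: Apoly_induct)
  case 0 then show ?case by simp
next
  case (pCons e a)
  then show ?case
    by (simp add: dv_pCons phi_smult tmul_smult_right smult_add_right)
qed

lemma dv_wadd: "dv (v + w) a = dv v a + dv w a"
  by (induction a) (simp_all add: dv_pCons tmul_add_right tmul_add_left algebra_simps)

lemma dv_wminus: "dv (- w) a = - dv w a"
  by (induction a) (simp_all add: dv_pCons tmul_minus_right tmul_minus_left algebra_simps)

lemma dv_wdiff: "dv (v - w) a = dv v a - dv w a"
  using dv_wadd[of v "-w" a] dv_wminus[of w a] by simp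

lemma dv_wsmult: "c \<in> Fq q \<Longrightarrow> dv (smult c w) a = smult c (dv w a)"
  by (induction a) (simp_all add: dv_pCons tmul_smult_right tmul_smult_left smult_add_right)

lemma psi_t_comm: "a \<in> Apoly q \<Longrightarrow> TM \<psi>t (\<psi> a) = TM (\<psi> a) \<psi>t"
  using psi_comm[OF Apoly_t] by blast

lemma dv_mult: "a \<in> Apoly q \<Longrightarrow> b \<in> Apoly q \<Longrightarrow> dv w (a * b) = TM (\<psi> a) (dv w b) + TM (dv w a) (\<phi> b)"
proof (induction a rule: Apoly_induct)
  case 0 then show ?case by (simp add: psi_0)
next
  case (pCons c a)
  have ab: "a * b \<in> Apoly q" using pCons by (simp add: Apoly_mult)
  have "dv w (pCons c a * b) = dv w (smult c b + pCons 0 (a * b))" by simp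
  also have "\<dots> = dv w (smult c b) + dv w (pCons 0 (a * b))"
    using pCons ab by (intro dv_add) (auto simp: Apoly_smult Apoly_pCons Fq_0)
  also have "\<dots> = smult c (dv w b) + TM \<psi>t (TM (\<psi> a) (dv w b) + TM (dv w a) (\<phi> b)) + TM w (TM (\<phi> a) (\<phi> b))"
    using pCons by (simp add: dv_smult dv_pCons phi_mult)
  also have "\<dots> = TM (\<psi> (pCons c a)) (dv w b) + TM (dv w (pCons c a)) (\<phi> b)"
    using pCons by (simp add: psi_pCons dv_pCons tmul_add_left tmul_add_right tmul_const_left tmul_assoc algebra_simps)
  finally show ?case .
qed

lemma DV_Der: "DV w \<in> Der q \<phi> \<psi>"
  unfolding Der_def DV_def
  by (auto simp: Apoly_add Apoly_smult Apoly_mult dv_add dv_smult dv_mult)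

lemma DV_t [simp]: "DV w tvar = w"
  by (simp add: DV_def Apoly_t dv_t)

lemma DV_Der0: "DV w \<in> Der0 q \<phi> \<psi> \<longleftrightarrow> coeff w 0 = 0"
  by (simp add: Der0_def DV_Der)

lemma Der_add: "\<delta> \<in> Der q \<phi> \<psi> \<Longrightarrow> a \<in> Apoly q \<Longrightarrow> b \<in> Apoly q \<Longrightarrow> \<delta> (a + b) = \<delta> a + \<delta> b"
  unfolding Der_def by blast
lemma Der_smult: "\<delta> \<in> Der q \<phi> \<psi> \<Longrightarrow> c \<in> Fq q \<Longrightarrow> a \<in> Apoly q \<Longrightarrow> \<delta> (smult c a) = smult c (\<delta> a)"
  unfolding Der_def by blast
lemma Der_mult: "\<delta> \<in> Der q \<phi> \<psi> \<Longrightarrow> a \<in> Apoly q \<Longrightarrow> b \<in> Apoly q \<Longrightarrow> \<delta> (a * b) = TM (\<psi> a) (\<delta> b) + TM (\<delta> a) (\<phi> b)"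
  unfolding Der_def by blast
lemma Der_out: "\<delta> \<in> Der q \<phi> \<psi> \<Longrightarrow> a \<notin> Apoly q \<Longrightarrow> \<delta> a = 0"
  unfolding Der_def by blast

lemma Der_1: assumes "\<delta> \<in> Der q \<phi> \<psi>" shows "\<delta> 1 = 0"
proof -
  have "\<delta> (1 * 1) = TM (\<psi> 1) (\<delta> 1) + TM (\<delta> 1) (\<phi> 1)" using Der_mult[OF assms Apoly_1 Apoly_1] .
  hence "\<delta> 1 + 0 = \<delta> 1 + \<delta> 1" by (simp add: psi_1 phi_1)
  thus ?thesis by (metis add_left_cancel)
qed

lemma der_unique: assumes "\<delta> \<in> Der q \<phi> \<psi>" shows "\<delta> = DV (\<delta> tvar)"
proof
  fix a
  show "\<delta> a = DV (\<delta> tvar) a"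
  proof (cases "a \<in> Apoly q")
    case False then show ?thesis using Der_out[OF assms] by (simp add: DV_def)
  next
    case True
    then have "\<delta> a = dv (\<delta> tvar) a"
    proof (induction a rule: Apoly_induct)
      case 0
      have "\<delta> (0 + 0) = \<delta> 0 + \<delta> 0" using Der_add[OF assms Apoly_0 Apoly_0] .
      hence "\<delta> 0 = 0" by (metis add.right_neutral add_left_cancel)
      then show ?case by simp
    next
      case (pCons c a)
      have c1: "\<delta> [:c:] = 0"
        using Der_smult[OF assms pCons(1) Apoly_1] Der_1[OF assms] by (simp add: one_pCons)
      have "\<delta> (pCons c a) = \<delta> ([:c:] + tvar * a)" by simp
      also have "\<dots> = \<delta> [:c:] + \<delta> (tvar * a)"
        using pCons by (intro Der_add[OF assms]) (auto intro: Apoly_const simp: Apoly_pCons Fq_0 Apoly_0)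
      also have "\<dots> = TM \<psi>t (\<delta> a) + TM (\<delta> tvar) (\<phi> a)"
        using c1 Der_mult[OF assms Apoly_t pCons(2)] by simp
      finally show ?case using pCons by (simp add: dv_pCons)
    qed
    then show ?thesis using True by (simp add: DV_def)
  qed
qed

lemma Der_eqI: "\<delta> \<in> Der q \<phi> \<psi> \<Longrightarrow> \<delta>' \<in> Der q \<phi> \<psi> \<Longrightarrow> \<delta> tvar = \<delta>' tvar \<Longrightarrow> \<delta> = \<delta>'"
  by (metis der_unique)

lemma der_of_eq: "der_of q \<phi> \<psi> w = DV w"
  unfolding der_of_def
  by (rule the_equality) (auto simp: DV_Der dest: der_unique)

lemma DV_diff: "(\<lambda>a. DV v a - DV w a) = DV (v - w)"
  by (auto simp: DV_def dv_wdiff)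

lemma DV_add: "(\<lambda>a. DV v a + DV w a) = DV (v + w)"
  by (auto simp: DV_def dv_wadd)

lemma der_pt: "\<delta> \<in> Der q \<phi> \<psi> \<Longrightarrow> \<delta> a = DV (\<delta> tvar) a"
  by (rule fun_cong[OF der_unique])

lemma DV_diff_pt: "DV (v - w) a = DV v a - DV w a"
  by (simp add: DV_def dv_wdiff)

lemma DV_add_pt: "DV (v + w) a = DV v a + DV w a"
  by (simp add: DV_def dv_wadd)

lemma Der_diff: assumes "\<delta> \<in> Der q \<phi> \<psi>" "\<delta>' \<in> Der q \<phi> \<psi>"
  shows "(\<lambda>a. \<delta> a - \<delta>' a) = DV (\<delta> tvar - \<delta>' tvar)"
proof (rule ext)
  fix a
  have "\<delta> a = DV (\<delta> tvar) a" "\<delta>' a = DV (\<delta>' tvar) a" using der_pt assms by blast+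
  then show "\<delta> a - \<delta>' a = DV (\<delta> tvar - \<delta>' tvar) a" by (simp only: DV_diff_pt)
qed

lemma Der_sum: assumes "\<delta> \<in> Der q \<phi> \<psi>" "\<delta>' \<in> Der q \<phi> \<psi>"
  shows "(\<lambda>a. \<delta> a + \<delta>' a) = DV (\<delta> tvar + \<delta>' tvar)"
proof (rule ext)
  fix a
  have "\<delta> a = DV (\<delta> tvar) a" "\<delta>' a = DV (\<delta>' tvar) a" using der_pt assms by blast+
  then show "\<delta> a + \<delta>' a = DV (\<delta> tvar + \<delta>' tvar) a" by (simp only: DV_add_pt)
qed

lemma dv_wpsi: "b \<in> Apoly q \<Longrightarrow> a \<in> Apoly q \<Longrightarrow> dv (TM (\<psi> a) w) b = TM (\<psi> a) (dv w b)"
proof (induction b rule: Apoly_induct)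
  case 0 then show ?case by simp
next
  case (pCons c b)
  then show ?case
    by (simp add: dv_pCons tmul_add_right tmul_assoc[symmetric] psi_t_comm)
qed

lemma DV_psi: "a \<in> Apoly q \<Longrightarrow> (\<lambda>b. TM (\<psi> a) (DV w b)) = DV (TM (\<psi> a) w)"
  by (auto simp: DV_def dv_wpsi)

lemma Der_psi: assumes "\<delta> \<in> Der q \<phi> \<psi>" "a \<in> Apoly q"
  shows "(\<lambda>b. TM (\<psi> a) (\<delta> b)) = DV (TM (\<psi> a) (\<delta> tvar))"
proof (rule ext)
  fix b
  have "\<delta> b = DV (\<delta> tvar) b" using der_pt assms by blast
  then show "TM (\<psi> a) (\<delta> b) = DV (TM (\<psi> a) (\<delta> tvar)) b"
    using fun_cong[OF DV_psi[OF assms(2)], of "\<delta> tvar" b] by simp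
qed

lemma dv_inner: "b \<in> Apoly q \<Longrightarrow> dv (TM U \<phi>t - TM \<psi>t U) b = TM U (\<phi> b) - TM (\<psi> b) U"
proof (induction b rule: Apoly_induct)
  case 0 then show ?case by (simp add: phi_0 psi_0)
next
  case (pCons c b)
  have "dv (TM U \<phi>t - TM \<psi>t U) (pCons c b) = TM \<psi>t (TM U (\<phi> b) - TM (\<psi> b) U) + TM (TM U \<phi>t - TM \<psi>t U) (\<phi> b)"
    by (simp only: dv_pCons pCons.IH)
  also have "\<dots> = TM U (\<phi> (pCons c b)) - TM (\<psi> (pCons c b)) U"
    using pCons(1,2) by (simp add: phi_pCons psi_pCons tmul_add_right tmul_add_left tmul_diff_right tmul_diff_left
        tmul_assoc tmul_const_left tmul_const_right)
  finally show ?case .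
qed

lemma inner_der_eq: "inner_der q \<phi> \<psi> U = DV (TM U \<phi>t - TM \<psi>t U)"
  by (auto simp: inner_der_def DV_def dv_inner)

definition ImS :: "'k poly set" where
  "ImS = {y. \<exists>U. y = TM U \<phi>t - TM \<psi>t U}"

lemma Der_in_iff: assumes "\<delta> \<in> Der q \<phi> \<psi>" shows "\<delta> \<in> Der_in q \<phi> \<psi> \<longleftrightarrow> \<delta> tvar \<in> ImS"
proof
  assume "\<delta> \<in> Der_in q \<phi> \<psi>"
  then obtain U where "\<delta> = inner_der q \<phi> \<psi> U" by (auto simp: Der_in_def)
  then show "\<delta> tvar \<in> ImS" by (auto simp: inner_der_eq ImS_def)
next
  assume "\<delta> tvar \<in> ImS"
  then obtain U where "\<delta> tvar = TM U \<phi>t - TM \<psi>t U" by (auto simp: ImS_def)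
  then have "\<delta> = inner_der q \<phi> \<psi> U" using der_unique[OF assms] by (simp only: inner_der_eq)
  then show "\<delta> \<in> Der_in q \<phi> \<psi>" by (auto simp: Der_in_def)
qed

end

lemma degree_lt_by_coeff:
  assumes "0 < D" "\<And>k. D \<le> k \<Longrightarrow> coeff p k = 0"
  shows "degree p < D"
proof (rule ccontr)
  assume "\<not> degree p < D"
  then have "D \<le> degree p" by simp
  then have "coeff p (degree p) = 0" using assms(2) by blast
  then have "p = 0" by simp
  then show False using \<open>D \<le> degree p\<close> assms(1) by simp
qed

lemma degree_add_lt: "degree p < N \<Longrightarrow> degree r < N \<Longrightarrow> degree (p + r) < N"
  using degree_add_le_max[of p r] by simp

lemma degree_diff_lt: "degree (p::'a::ab_group_add poly) < N \<Longrightarrow> degree r < N \<Longrightarrow> degree (p - r) < N"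
  using degree_diff_le_max[of p r] by simp

context DM begin

abbreviation nn where "nn \<equiv> rk \<phi>"

lemma nn_def': "nn = degree \<phi>t" by (simp add: rk_def)

lemma nn_pos: "0 < nn" using rklt by simp

lemma rkpsi: "degree \<psi>t < nn" using rklt by (simp add: rk_def)

lemma phit_ne0: "\<phi>t \<noteq> 0" using nn_pos by (auto simp: rk_def)

lemma lead_phit_ne0: "lead_coeff \<phi>t \<noteq> 0" using phit_ne0 by simp

lemma coeff0_phit: "coeff \<phi>t 0 = \<theta>" using dphi by (simp add: drinfeld_module_def)
lemma coeff0_psit: "coeff \<psi>t 0 = \<theta>" using dpsi by (simp add: drinfeld_module_def)

lemma ImS_I: "TM U \<phi>t - TM \<psi>t U \<in> ImS" by (auto simp: ImS_def)

lemma ImS_0: "0 \<in> ImS" using ImS_I[of 0] by simp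

lemma ImS_add: assumes "x \<in> ImS" "y \<in> ImS" shows "x + y \<in> ImS"
proof -
  obtain U V where "x = TM U \<phi>t - TM \<psi>t U" "y = TM V \<phi>t - TM \<psi>t V" using assms by (auto simp: ImS_def)
  then have "x + y = TM (U + V) \<phi>t - TM \<psi>t (U + V)" by (simp add: tmul_add_left tmul_add_right)
  then show ?thesis by (simp add: ImS_I)
qed

lemma ImS_uminus: assumes "x \<in> ImS" shows "- x \<in> ImS"
proof -
  obtain U where "x = TM U \<phi>t - TM \<psi>t U" using assms by (auto simp: ImS_def)
  then have "- x = TM (- U) \<phi>t - TM \<psi>t (- U)" by (simp add: tmul_minus_left tmul_minus_right)
  then show ?thesis by (simp add: ImS_I)
qed

lemma ImS_diff: "x \<in> ImS \<Longrightarrow> y \<in> ImS \<Longrightarrow> x - y \<in> ImS"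
  using ImS_add[of x "- y"] ImS_uminus[of y] by simp

lemma ImS_sum: "(\<And>i. i \<in> A \<Longrightarrow> f i \<in> ImS) \<Longrightarrow> sum f A \<in> ImS"
  by (induction A rule: infinite_finite_induct) (auto simp: ImS_0 ImS_add)

lemma ImS_psi: assumes "a \<in> Apoly q" "x \<in> ImS" shows "TM (\<psi> a) x \<in> ImS"
proof -
  obtain U where "x = TM U \<phi>t - TM \<psi>t U" using assms by (auto simp: ImS_def)
  then have "TM (\<psi> a) x = TM (TM (\<psi> a) U) \<phi>t - TM \<psi>t (TM (\<psi> a) U)"
    using psi_t_comm[OF assms(1)] by (simp add: tmul_diff_right tmul_assoc[symmetric])
  then show ?thesis by (simp add: ImS_I)
qed

lemma ImS_coeff0: assumes "x \<in> ImS" shows "coeff x 0 = 0"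
proof -
  obtain U where "x = TM U \<phi>t - TM \<psi>t U" using assms by (auto simp: ImS_def)
  then show ?thesis by (simp add: coeff_tmul_0 coeff0_phit coeff0_psit)
qed

lemma ImS_top: assumes "U \<noteq> 0" shows "coeff (TM U \<phi>t - TM \<psi>t U) (degree U + nn) \<noteq> 0"
proof -
  have "coeff (TM U \<phi>t) (degree U + nn) = lead_coeff U * lead_coeff \<phi>t ^ (q ^ degree U)"
    using coeff_tmul_top[of U \<phi>t] by (simp add: nn_def')
  moreover have "coeff (TM \<psi>t U) (degree U + nn) = 0"
    using rkpsi by (intro coeff_tmul_gt) simp
  ultimately show ?thesis using assms lead_phit_ne0 by simp
qed

lemma red_unique: assumes "degree r1 < nn" "degree r2 < nn" "r1 - r2 \<in> ImS" shows "r1 = r2"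
proof -
  obtain U where U: "r1 - r2 = TM U \<phi>t - TM \<psi>t U" using assms by (auto simp: ImS_def)
  show ?thesis
  proof (cases "U = 0")
    case True then show ?thesis using U by simp
  next
    case False
    have "degree (r1 - r2) < degree U + nn" using degree_diff_lt[OF assms(1,2)] by simp
    then have "coeff (r1 - r2) (degree U + nn) = 0" by (rule coeff_eq_0)
    then show ?thesis using ImS_top[OF False] U by metis
  qed
qed

lemma red_exists: "\<exists>r. degree r < nn \<and> w - r \<in> ImS"
proof (induction "degree w" arbitrary: w rule: less_induct)
  case less
  show ?case
  proof (cases "degree w < nn")
    case True then show ?thesis using ImS_0 by (intro exI[of _ w]) simp
  next
    case False
    define D where "D = degree w"
    define d where "d = D - nn"
    have Dd: "D = d + nn" using False by (simp add: d_def D_def)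
    have w0: "w \<noteq> 0" using False nn_pos by auto
    define c where "c = lead_coeff w / lead_coeff \<phi>t ^ (q ^ d)"
    have c0: "c \<noteq> 0" using w0 lead_phit_ne0 by (simp add: c_def)
    define U where "U = monom c d"
    have dU: "degree U = d" using c0 by (simp add: U_def degree_monom_eq)
    define w' where "w' = w - (TM U \<phi>t - TM \<psi>t U)"
    have cw: "coeff w' k = 0" if "D \<le> k" for k
    proof (cases "k = D")
      case True
      have "coeff (TM U \<phi>t) D = lead_coeff U * lead_coeff \<phi>t ^ (q ^ degree U)"
        using coeff_tmul_top[of U \<phi>t] by (simp add: nn_def' Dd dU)
      also have "\<dots> = c * lead_coeff \<phi>t ^ (q ^ d)"
      proof -
        have "lead_coeff U = coeff U d" using dU by simp
        also have "\<dots> = c" by (simp add: U_def)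
        finally show ?thesis using dU by simp
      qed
      also have "\<dots> = lead_coeff w" using lead_phit_ne0 by (simp add: c_def)
      finally have 1: "coeff (TM U \<phi>t) D = lead_coeff w" .
      have 2: "coeff (TM \<psi>t U) D = 0" using rkpsi by (intro coeff_tmul_gt) (simp add: dU Dd)
      show ?thesis using 1 2 True by (simp add: w'_def D_def)
    next
      case False
      with that have k: "D < k" by simp
      have 1: "coeff (TM U \<phi>t) k = 0" using k by (intro coeff_tmul_gt) (simp add: dU Dd nn_def')
      have 2: "coeff (TM \<psi>t U) k = 0" using rkpsi k by (intro coeff_tmul_gt) (simp add: dU Dd)
      have 3: "coeff w k = 0" using k by (simp add: D_def coeff_eq_0)
      show ?thesis using 1 2 3 by (simp add: w'_def)
    qed
    have "degree w' < D" using nn_pos Dd by (intro degree_lt_by_coeff cw) auto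
    then obtain r where r: "degree r < nn" "w' - r \<in> ImS" using less D_def by blast
    have "w - r = (w' - r) + (TM U \<phi>t - TM \<psi>t U)" by (simp add: w'_def)
    then have "w - r \<in> ImS" using ImS_add[OF r(2) ImS_I[of U]] by metis
    then show ?thesis using r by blast
  qed
qed

definition red :: "'k poly \<Rightarrow> 'k poly" where
  "red w = (THE r. degree r < nn \<and> w - r \<in> ImS)"

lemma red_props: "degree (red w) < nn \<and> w - red w \<in> ImS"
proof -
  obtain r where r: "degree r < nn" "w - r \<in> ImS" using red_exists by blast
  have "red w = r" unfolding red_def
  proof (rule the_equality)
    show "degree r < nn \<and> w - r \<in> ImS" using r by blast
    fix r' assume "degree r' < nn \<and> w - r' \<in> ImS"
    then show "r' = r" using r red_unique[of r' r] ImS_diff[of "w - r" "w - r'"] by simp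
  qed
  then show ?thesis using r by simp
qed

lemma red_deg: "degree (red w) < nn" using red_props by blast
lemma red_ImS: "w - red w \<in> ImS" using red_props by blast

lemma red_eq: "degree r < nn \<Longrightarrow> w - r \<in> ImS \<Longrightarrow> red w = r"
  using red_unique[of "red w" r] red_props[of w] ImS_diff[of "w - r" "w - red w"] by simp

lemma red_small: "degree w < nn \<Longrightarrow> red w = w"
  using red_eq[of w w] ImS_0 by simp

lemma red_0 [simp]: "red 0 = 0" using red_small nn_pos by simp

lemma red_add: "red (v + w) = red v + red w"
proof (rule red_eq)
  show "degree (red v + red w) < nn" by (intro degree_add_lt red_deg)
  have "v + w - (red v + red w) = (v - red v) + (w - red w)" by simp
  then show "v + w - (red v + red w) \<in> ImS" using ImS_add[OF red_ImS[of v] red_ImS[of w]] by metis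
qed

lemma red_sum: "red (\<Sum>i\<in>A. f i) = (\<Sum>i\<in>A. red (f i))"
  by (induction A rule: infinite_finite_induct) (auto simp: red_add)

lemma red_cong: "v - w \<in> ImS \<Longrightarrow> red v = red w"
proof -
  assume "v - w \<in> ImS"
  then have "v - red w \<in> ImS" using ImS_add[OF _ red_ImS[of w]] by (metis add_diff_eq diff_add_cancel)
  then show ?thesis using red_eq red_deg by blast
qed

lemma red_red: "red (red w) = red w" using red_small red_deg by blast

lemma red_psi: assumes "a \<in> Apoly q" shows "red (TM (\<psi> a) (red w)) = red (TM (\<psi> a) w)"
proof (rule red_cong)
  have "TM (\<psi> a) (red w) - TM (\<psi> a) w = - TM (\<psi> a) (w - red w)" by (simp add: tmul_diff_right)
  then show "TM (\<psi> a) (red w) - TM (\<psi> a) w \<in> ImS" using ImS_uminus ImS_psi[OF assms red_ImS] by simp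
qed

lemma red_coeff0: "coeff (red w) 0 = coeff w 0"
  using ImS_coeff0[OF red_ImS[of w]] by simp

end

context DM begin

definition ClS :: "'k poly set \<Rightarrow> 'k poly \<Rightarrow> ('k poly \<Rightarrow> 'k poly) set" where
  "ClS S w = DV ` {v \<in> S. w - v \<in> ImS}"

definition S0 :: "'k poly set" where "S0 = {w. coeff w 0 = 0}"

lemma DV_inj: "DV v = DV w \<Longrightarrow> v = w"
  by (metis DV_t)

lemma Der_img: "Der q \<phi> \<psi> = DV ` UNIV"
  using DV_Der der_unique by blast

lemma Der0_img: "Der0 q \<phi> \<psi> = DV ` S0"
proof -
  have "\<delta> \<in> DV ` S0" if "\<delta> \<in> Der0 q \<phi> \<psi>" for \<delta>
  proof -
    have "\<delta> \<in> Der q \<phi> \<psi>" "coeff (\<delta> tvar) 0 = 0" using that by (auto simp: Der0_def)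
    then show ?thesis using der_unique[of \<delta>] by (auto simp: S0_def)
  qed
  moreover have "DV w \<in> Der0 q \<phi> \<psi>" if "w \<in> S0" for w using that by (simp add: DV_Der0 S0_def)
  ultimately show ?thesis by blast
qed


lemma cls_S:
  assumes D: "D = DV ` S" and Sd: "\<And>v w. v \<in> S \<Longrightarrow> w \<in> S \<Longrightarrow> v - w \<in> S" and v: "v \<in> S"
  shows "ext_cls q \<phi> \<psi> D (DV v) = ClS S v"
proof -
  have "(DV v, \<delta>') \<in> ext_rel q \<phi> \<psi> D \<longleftrightarrow> \<delta>' \<in> ClS S v" for \<delta>'
  proof
    assume "(DV v, \<delta>') \<in> ext_rel q \<phi> \<psi> D"
    then have 1: "\<delta>' \<in> D" "(\<lambda>a. DV v a - \<delta>' a) \<in> Der_in q \<phi> \<psi>" by (auto simp: ext_rel_def)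
    then obtain w where w: "w \<in> S" "\<delta>' = DV w" using D by blast
    have "(\<lambda>a. DV v a - \<delta>' a) = DV (v - w)" using w by (simp add: DV_diff)
    then have "v - w \<in> ImS" using 1 Der_in_iff[OF DV_Der, of "v - w"] by simp
    then show "\<delta>' \<in> ClS S v" using w by (auto simp: ClS_def)
  next
    assume "\<delta>' \<in> ClS S v"
    then obtain w where w: "w \<in> S" "v - w \<in> ImS" "\<delta>' = DV w" by (auto simp: ClS_def)
    have e: "(\<lambda>a. DV v a - \<delta>' a) = DV (v - w)" using w by (simp add: DV_diff)
    have "DV (v - w) \<in> Der_in q \<phi> \<psi>" using Der_in_iff[OF DV_Der, of "v - w"] w by simp
    moreover have "DV (v - w) \<in> D" using D Sd[OF v w(1)] by blast
    moreover have "DV v \<in> D" "\<delta>' \<in> D" using D v w by auto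
    ultimately show "(DV v, \<delta>') \<in> ext_rel q \<phi> \<psi> D" using e by (auto simp: ext_rel_def)
  qed
  then show ?thesis by (auto simp: ext_cls_def)
qed

lemma quot_S:
  assumes D: "D = DV ` S" and Sd: "\<And>v w. v \<in> S \<Longrightarrow> w \<in> S \<Longrightarrow> v - w \<in> S"
  shows "D // ext_rel q \<phi> \<psi> D = ClS S ` S"
proof -
  have "D // ext_rel q \<phi> \<psi> D = (\<lambda>\<delta>. ext_cls q \<phi> \<psi> D \<delta>) ` D"
    by (auto simp: quotient_def ext_cls_def)
  also have "\<dots> = (\<lambda>v. ext_cls q \<phi> \<psi> D (DV v)) ` S" using D by auto
  also have "\<dots> = ClS S ` S" using cls_S[OF D Sd] by auto
  finally show ?thesis .
qed

lemma ClS_mem: "v \<in> S \<Longrightarrow> DV v \<in> ClS S v"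
  using ImS_0 by (auto simp: ClS_def)

lemma ClS_eq: assumes "v \<in> S" "w \<in> S" shows "ClS S v = ClS S w \<longleftrightarrow> v - w \<in> ImS"
proof
  assume "ClS S v = ClS S w"
  then have "DV v \<in> ClS S w" using ClS_mem[OF assms(1)] by simp
  then obtain u where "u \<in> S" "w - u \<in> ImS" "DV v = DV u" by (auto simp: ClS_def)
  then have h: "w - v \<in> ImS" using DV_inj by blast
  have "v - w = - (w - v)" by simp
  then show "v - w \<in> ImS" using ImS_uminus[OF h] by simp
next
  assume a: "v - w \<in> ImS"
  have "v - u \<in> ImS \<longleftrightarrow> w - u \<in> ImS" for u
  proof
    assume h: "v - u \<in> ImS"
    have "w - u = (v - u) - (v - w)" by simp
    then show "w - u \<in> ImS" using ImS_diff[OF h a] by simp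
  next
    assume h: "w - u \<in> ImS"
    have "v - u = (v - w) + (w - u)" by simp
    then show "v - u \<in> ImS" using ImS_add[OF a h] by simp
  qed
  then show "ClS S v = ClS S w" by (simp add: ClS_def)
qed

lemma rep_ClS: assumes "v \<in> S"
  obtains u where "u \<in> S" "v - u \<in> ImS" "rep (ClS S v) = DV u"
proof -
  have "rep (ClS S v) \<in> ClS S v" unfolding rep_def by (rule someI[of "\<lambda>\<delta>. \<delta> \<in> ClS S v"]) (rule ClS_mem[OF assms])
  then show ?thesis using that by (auto simp: ClS_def)
qed

lemma ClS_cong: "v \<in> S \<Longrightarrow> w \<in> S \<Longrightarrow> v - w \<in> ImS \<Longrightarrow> ClS S v = ClS S w"
  using ClS_eq by blast

lemma add_S:
  assumes D: "D = DV ` S" and Sd: "\<And>v w. v \<in> S \<Longrightarrow> w \<in> S \<Longrightarrow> v - w \<in> S"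
    and Sa: "\<And>v w. v \<in> S \<Longrightarrow> w \<in> S \<Longrightarrow> v + w \<in> S" and v: "v \<in> S" and w: "w \<in> S"
  shows "ext_add q \<phi> \<psi> D (ClS S v) (ClS S w) = ClS S (v + w)"
proof -
  obtain u1 where u1: "u1 \<in> S" "v - u1 \<in> ImS" "rep (ClS S v) = DV u1" using rep_ClS[OF v] by blast
  obtain u2 where u2: "u2 \<in> S" "w - u2 \<in> ImS" "rep (ClS S w) = DV u2" using rep_ClS[OF w] by blast
  have "(\<lambda>b. rep (ClS S v) b + rep (ClS S w) b) = DV (u1 + u2)" using u1 u2 by (simp add: DV_add)
  then have "ext_add q \<phi> \<psi> D (ClS S v) (ClS S w) = ClS S (u1 + u2)"
    using cls_S[OF D Sd Sa[OF u1(1) u2(1)]] by (simp add: ext_add_def)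
  also have "\<dots> = ClS S (v + w)"
  proof (rule ClS_cong)
    show "u1 + u2 \<in> S" "v + w \<in> S" using u1 u2 v w Sa by auto
    have eq: "u1 + u2 - (v + w) = - ((v - u1) + (w - u2))" by simp
    show "u1 + u2 - (v + w) \<in> ImS" unfolding eq by (rule ImS_uminus[OF ImS_add[OF u1(2) u2(2)]])
  qed
  finally show ?thesis .
qed

lemma act_S:
  assumes D: "D = DV ` S" and Sd: "\<And>v w. v \<in> S \<Longrightarrow> w \<in> S \<Longrightarrow> v - w \<in> S"
    and Sp: "\<And>a v. a \<in> Apoly q \<Longrightarrow> v \<in> S \<Longrightarrow> TM (\<psi> a) v \<in> S" and v: "v \<in> S" and a: "a \<in> Apoly q"
  shows "ext_act q \<phi> \<psi> D a (ClS S v) = ClS S (TM (\<psi> a) v)"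
proof -
  obtain u where u: "u \<in> S" "v - u \<in> ImS" "rep (ClS S v) = DV u" using rep_ClS[OF v] by blast
  have "(\<lambda>b. TM (\<psi> a) (rep (ClS S v) b)) = DV (TM (\<psi> a) u)" using u DV_psi[OF a] by simp
  then have "ext_act q \<phi> \<psi> D a (ClS S v) = ClS S (TM (\<psi> a) u)"
    using cls_S[OF D Sd Sp[OF a u(1)]] by (simp add: ext_act_def)
  also have "\<dots> = ClS S (TM (\<psi> a) v)"
  proof (rule ClS_cong)
    show "TM (\<psi> a) u \<in> S" "TM (\<psi> a) v \<in> S" using Sp a u v by auto
    have eq: "TM (\<psi> a) u - TM (\<psi> a) v = - TM (\<psi> a) (v - u)" by (simp add: tmul_diff_right)
    show "TM (\<psi> a) u - TM (\<psi> a) v \<in> ImS" unfolding eq by (rule ImS_uminus[OF ImS_psi[OF a u(2)]])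
  qed
  finally show ?thesis .
qed

lemma U_d: "v \<in> UNIV \<Longrightarrow> w \<in> UNIV \<Longrightarrow> v - w \<in> UNIV" by simp
lemma U_a: "v \<in> UNIV \<Longrightarrow> w \<in> UNIV \<Longrightarrow> v + w \<in> UNIV" by simp
lemma U_p: "a \<in> Apoly q \<Longrightarrow> v \<in> UNIV \<Longrightarrow> TM (\<psi> a) v \<in> UNIV" by simp
lemma S0_d: "v \<in> S0 \<Longrightarrow> w \<in> S0 \<Longrightarrow> v - w \<in> S0" by (simp add: S0_def)
lemma S0_a: "v \<in> S0 \<Longrightarrow> w \<in> S0 \<Longrightarrow> v + w \<in> S0" by (simp add: S0_def)
lemma S0_p: "a \<in> Apoly q \<Longrightarrow> v \<in> S0 \<Longrightarrow> TM (\<psi> a) v \<in> S0" by (simp add: S0_def coeff_tmul_0)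

lemma cls_U: "ext_cls q \<phi> \<psi> (Der q \<phi> \<psi>) (DV v) = ClS UNIV v"
  by (rule cls_S[OF Der_img]) auto
lemma cls_0: "v \<in> S0 \<Longrightarrow> ext_cls q \<phi> \<psi> (Der0 q \<phi> \<psi>) (DV v) = ClS S0 v"
  by (rule cls_S[OF Der0_img]) (auto simp: S0_def)
lemma quot_U: "Der q \<phi> \<psi> // ext_rel q \<phi> \<psi> (Der q \<phi> \<psi>) = ClS UNIV ` UNIV"
  by (rule quot_S[OF Der_img]) auto
lemma quot_0: "Der0 q \<phi> \<psi> // ext_rel q \<phi> \<psi> (Der0 q \<phi> \<psi>) = ClS S0 ` S0"
  by (rule quot_S[OF Der0_img]) (auto simp: S0_def)
lemma add_U: "ext_add q \<phi> \<psi> (Der q \<phi> \<psi>) (ClS UNIV v) (ClS UNIV w) = ClS UNIV (v + w)"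
  by (rule add_S[OF Der_img]) auto
lemma add_0: "v \<in> S0 \<Longrightarrow> w \<in> S0 \<Longrightarrow> ext_add q \<phi> \<psi> (Der0 q \<phi> \<psi>) (ClS S0 v) (ClS S0 w) = ClS S0 (v + w)"
  by (rule add_S[OF Der0_img]) (auto simp: S0_def)
lemma act_U: "a \<in> Apoly q \<Longrightarrow> ext_act q \<phi> \<psi> (Der q \<phi> \<psi>) a (ClS UNIV v) = ClS UNIV (TM (\<psi> a) v)"
  by (rule act_S[OF Der_img]) auto
lemma act_0: "v \<in> S0 \<Longrightarrow> a \<in> Apoly q \<Longrightarrow> ext_act q \<phi> \<psi> (Der0 q \<phi> \<psi>) a (ClS S0 v) = ClS S0 (TM (\<psi> a) v)"
  by (rule act_S[OF Der0_img]) (auto simp: S0_def coeff_tmul_0)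

lemma Ext1_eq: "Ext1 q \<phi> \<psi> = ClS UNIV ` UNIV"
  unfolding Ext1_def using quot_U by simp

lemma Ext1_0_eq: "Ext1_0 q \<phi> \<psi> = ClS S0 ` S0"
  unfolding Ext1_0_def using quot_0 by simp

lemma ext_of_eq: "ext_of q \<phi> \<psi> w = ClS UNIV w"
  unfolding ext_of_def der_of_eq using cls_U by simp

lemma inv_ext_of: "inv_into (Tlt nn) (ext_of q \<phi> \<psi>) (ClS UNIV y) = red y"
proof (rule inv_into_f_eq)
  show "inj_on (ext_of q \<phi> \<psi>) (Tlt nn)"
  proof (rule inj_onI)
    fix v w assume "v \<in> Tlt nn" "w \<in> Tlt nn" "ext_of q \<phi> \<psi> v = ext_of q \<phi> \<psi> w"
    then show "v = w" using red_unique ClS_eq[of v UNIV w] by (auto simp: ext_of_eq Tlt_def)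
  qed
  show "red y \<in> Tlt nn" by (simp add: Tlt_def red_deg)
  show "ext_of q \<phi> \<psi> (red y) = ClS UNIV y"
    unfolding ext_of_eq using ClS_eq[of "red y" UNIV y] red_ImS[of y] ImS_uminus by fastforce
qed

lemma trans_add_eq: "trans_add q \<phi> \<psi> v w = red (v + w)"
  by (simp add: trans_add_def ext_of_eq add_U inv_ext_of)

lemma trans_act_eq: "a \<in> Apoly q \<Longrightarrow> trans_act q \<phi> \<psi> a w = red (TM (\<psi> a) w)"
  by (simp add: trans_act_def ext_of_eq act_U inv_ext_of)

lemma rep_val0: assumes "v \<in> S0" shows "red (rep (ClS S0 v) tvar) = red v"
proof -
  obtain u where u: "u \<in> S0" "v - u \<in> ImS" "rep (ClS S0 v) = DV u" using rep_ClS[OF assms] by blast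
  then show ?thesis using red_cong[of v u] by simp
qed

lemma red_S0: "v \<in> S0 \<Longrightarrow> red v \<in> T1n nn"
  by (simp add: T1n_def S0_def red_deg red_coeff0)

lemma part_i:
  "\<exists>F. bij_betw F (Ext1_0 q \<phi> \<psi>) (T1n nn) \<and>
        (\<forall>X\<in>Ext1_0 q \<phi> \<psi>. \<forall>Y\<in>Ext1_0 q \<phi> \<psi>.
           F (ext_add q \<phi> \<psi> (Der0 q \<phi> \<psi>) X Y) = trans_add q \<phi> \<psi> (F X) (F Y)) \<and>
        (\<forall>a\<in>Apoly q. \<forall>X\<in>Ext1_0 q \<phi> \<psi>.
           F (ext_act q \<phi> \<psi> (Der0 q \<phi> \<psi>) a X) = trans_act q \<phi> \<psi> a (F X))"
proof (intro exI[of _ "\<lambda>X. red (rep X tvar)"] conjI ballI)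
  show "bij_betw (\<lambda>X. red (rep X tvar)) (Ext1_0 q \<phi> \<psi>) (T1n nn)"
    unfolding Ext1_0_eq
  proof (rule bij_betw_imageI)
    show "inj_on (\<lambda>X. red (rep X tvar)) (ClS S0 ` S0)"
    proof (rule inj_onI, clarify)
      fix v w assume vw: "v \<in> S0" "w \<in> S0" "red (rep (ClS S0 v) tvar) = red (rep (ClS S0 w) tvar)"
      then have "red v = red w" by (simp add: rep_val0)
      then have "v - w = (v - red v) - (w - red w)" by simp
      then have "v - w \<in> ImS" using ImS_diff[OF red_ImS red_ImS] by metis
      then show "ClS S0 v = ClS S0 w" using ClS_cong vw by blast
    qed
    show "(\<lambda>X. red (rep X tvar)) ` ClS S0 ` S0 = T1n nn"
    proof
      show "(\<lambda>X. red (rep X tvar)) ` ClS S0 ` S0 \<subseteq> T1n nn" using rep_val0 red_S0 by auto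
      show "T1n nn \<subseteq> (\<lambda>X. red (rep X tvar)) ` ClS S0 ` S0"
      proof
        fix r :: "'k poly" assume r: "r \<in> T1n nn"
        then have "r \<in> S0" "red r = r" by (auto simp: T1n_def S0_def red_small)
        then show "r \<in> (\<lambda>X. red (rep X tvar)) ` ClS S0 ` S0" using rep_val0 by (metis image_eqI)
      qed
    qed
  qed
next
  fix X Y assume "X \<in> Ext1_0 q \<phi> \<psi>" "Y \<in> Ext1_0 q \<phi> \<psi>"
  then obtain v w where vw: "v \<in> S0" "w \<in> S0" "X = ClS S0 v" "Y = ClS S0 w" by (auto simp: Ext1_0_eq)
  have "v + w \<in> S0" using vw S0_a by blast
  then show "red (rep (ext_add q \<phi> \<psi> (Der0 q \<phi> \<psi>) X Y) tvar) = trans_add q \<phi> \<psi> (red (rep X tvar)) (red (rep Y tvar))"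
    using vw by (simp add: add_0 rep_val0 trans_add_eq red_add red_red)
next
  fix a :: "'k poly" and X assume a: "a \<in> Apoly q" and "X \<in> Ext1_0 q \<phi> \<psi>"
  then obtain v where v: "v \<in> S0" "X = ClS S0 v" by (auto simp: Ext1_0_eq)
  have "TM (\<psi> a) v \<in> S0" using v a S0_p by blast
  then show "red (rep (ext_act q \<phi> \<psi> (Der0 q \<phi> \<psi>) a X) tvar) = trans_act q \<phi> \<psi> a (red (rep X tvar))"
    using v a by (simp add: act_0 rep_val0 trans_act_eq red_psi)
qed

end

context DM begin

lemma part_ii:
  "T1n nn \<subseteq> (Tlt nn :: 'k poly set) \<and> (0::'k poly) \<in> T1n nn \<and>
      (\<forall>v\<in>T1n nn. \<forall>w\<in>T1n nn. trans_add q \<phi> \<psi> v w \<in> T1n nn) \<and>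
      (\<forall>a\<in>Apoly q. \<forall>w\<in>T1n nn. trans_act q \<phi> \<psi> a w \<in> T1n nn)"
proof -
  have 1: "T1n nn \<subseteq> (Tlt nn :: 'k poly set)" by (auto simp: T1n_def Tlt_def)
  have 2: "(0::'k poly) \<in> T1n nn" using nn_pos by (simp add: T1n_def)
  have 3: "trans_add q \<phi> \<psi> v w \<in> T1n nn" if "v \<in> T1n nn" "w \<in> T1n nn" for v w
    using that by (simp add: trans_add_eq T1n_def red_deg red_coeff0)
  have 4: "trans_act q \<phi> \<psi> a w \<in> T1n nn" if "a \<in> Apoly q" "w \<in> T1n nn" for a w
    using that by (simp add: trans_act_eq T1n_def red_deg red_coeff0 coeff_tmul_0)
  show ?thesis using 1 2 3 4 by blast
qed

lemma j_eq: assumes "v \<in> S0" shows "ext_cls q \<phi> \<psi> (Der q \<phi> \<psi>) (rep (ClS S0 v)) = ClS UNIV v"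
proof -
  obtain u where u: "u \<in> S0" "v - u \<in> ImS" "rep (ClS S0 v) = DV u" using rep_ClS[OF assms] by blast
  then show ?thesis using cls_U[of u] ClS_cong[of u UNIV v] ImS_uminus[OF u(2)] by simp
qed

lemma part_iii:
  "(let j = (\<lambda>X. ext_cls q \<phi> \<psi> (Der q \<phi> \<psi>) (rep X)) in
        j ` Ext1_0 q \<phi> \<psi> \<subseteq> Ext1 q \<phi> \<psi> \<and> inj_on j (Ext1_0 q \<phi> \<psi>) \<and>
        (\<forall>X\<in>Ext1_0 q \<phi> \<psi>. \<forall>Y\<in>Ext1_0 q \<phi> \<psi>.
           j (ext_add q \<phi> \<psi> (Der0 q \<phi> \<psi>) X Y) = ext_add q \<phi> \<psi> (Der q \<phi> \<psi>) (j X) (j Y)) \<and>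
        (\<forall>a\<in>Apoly q. \<forall>X\<in>Ext1_0 q \<phi> \<psi>.
           j (ext_act q \<phi> \<psi> (Der0 q \<phi> \<psi>) a X) = ext_act q \<phi> \<psi> (Der q \<phi> \<psi>) a (j X)) \<and>
        (\<forall>X\<in>j ` Ext1_0 q \<phi> \<psi>. \<forall>Y\<in>j ` Ext1_0 q \<phi> \<psi>.
           ext_add q \<phi> \<psi> (Der q \<phi> \<psi>) X Y \<in> j ` Ext1_0 q \<phi> \<psi>) \<and>
        (\<forall>a\<in>Apoly q. \<forall>X\<in>j ` Ext1_0 q \<phi> \<psi>.
           ext_act q \<phi> \<psi> (Der q \<phi> \<psi>) a X \<in> j ` Ext1_0 q \<phi> \<psi>))"
proof -
  define j where "j = (\<lambda>X. ext_cls q \<phi> \<psi> (Der q \<phi> \<psi>) (rep X))"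
  have jv: "j (ClS S0 v) = ClS UNIV v" if "v \<in> S0" for v using j_eq[OF that] by (simp add: j_def)
  have img: "j ` Ext1_0 q \<phi> \<psi> = ClS UNIV ` S0"
    unfolding Ext1_0_eq using jv by (auto simp: image_iff)
  have 1: "j ` Ext1_0 q \<phi> \<psi> \<subseteq> Ext1 q \<phi> \<psi>" unfolding img Ext1_eq by auto
  have 2: "inj_on j (Ext1_0 q \<phi> \<psi>)"
    unfolding Ext1_0_eq
  proof (rule inj_onI, clarify)
    fix v w assume vw: "v \<in> S0" "w \<in> S0" "j (ClS S0 v) = j (ClS S0 w)"
    then have "ClS UNIV v = ClS UNIV w" using jv by simp
    then have "v - w \<in> ImS" using ClS_eq[of v UNIV w] by simp
    then show "ClS S0 v = ClS S0 w" using ClS_cong vw by blast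
  qed
  have 3: "\<forall>X\<in>Ext1_0 q \<phi> \<psi>. \<forall>Y\<in>Ext1_0 q \<phi> \<psi>.
           j (ext_add q \<phi> \<psi> (Der0 q \<phi> \<psi>) X Y) = ext_add q \<phi> \<psi> (Der q \<phi> \<psi>) (j X) (j Y)"
    unfolding Ext1_0_eq using jv by (auto simp: add_0 add_U S0_a)
  have 4: "\<forall>a\<in>Apoly q. \<forall>X\<in>Ext1_0 q \<phi> \<psi>.
           j (ext_act q \<phi> \<psi> (Der0 q \<phi> \<psi>) a X) = ext_act q \<phi> \<psi> (Der q \<phi> \<psi>) a (j X)"
    unfolding Ext1_0_eq using jv by (auto simp: act_0 act_U S0_p)
  have 5: "\<forall>X\<in>j ` Ext1_0 q \<phi> \<psi>. \<forall>Y\<in>j ` Ext1_0 q \<phi> \<psi>.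
           ext_add q \<phi> \<psi> (Der q \<phi> \<psi>) X Y \<in> j ` Ext1_0 q \<phi> \<psi>"
    unfolding img by (auto simp: add_U S0_a)
  have 6: "\<forall>a\<in>Apoly q. \<forall>X\<in>j ` Ext1_0 q \<phi> \<psi>.
           ext_act q \<phi> \<psi> (Der q \<phi> \<psi>) a X \<in> j ` Ext1_0 q \<phi> \<psi>"
    unfolding img by (auto simp: act_U S0_p)
  show ?thesis unfolding Let_def j_def[symmetric] using 1 2 3 4 5 6 by blast
qed

abbreviation dd where "dd \<equiv> nn - 1"

lemma Suc_dd: "Suc dd = nn" using nn_pos by simp

definition wv :: "(nat \<Rightarrow> 'k) \<Rightarrow> 'k poly" where
  "wv x = (\<Sum>i<dd. monom (x i) (Suc i))"

lemma coeff_wv: "coeff (wv x) k = (if 0 < k \<and> k - 1 < dd then x (k - 1) else 0)"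
proof -
  have "coeff (wv x) k = (\<Sum>i<dd. if Suc i = k then x i else 0)" by (simp add: wv_def coeff_sum)
  also have "\<dots> = (if 0 < k \<and> k - 1 < dd then x (k - 1) else 0)"
  proof (cases "0 < k \<and> k - 1 < dd")
    case True
    then have "(\<Sum>i<dd. if Suc i = k then x i else 0) = (\<Sum>i<dd. if i = k - 1 then x (k - 1) else 0)"
      by (intro sum.cong) auto
    also have "\<dots> = x (k - 1)" using True by simp
    finally show ?thesis using True by simp
  next
    case False
    then show ?thesis by (auto intro!: sum.neutral)
  qed
  finally show ?thesis .
qed

lemma wv_coeff0: "coeff (wv x) 0 = 0" by (simp add: coeff_wv)
lemma wv_S0: "wv x \<in> S0" by (simp add: S0_def wv_coeff0)

lemma wv_deg: "degree (wv x) < nn"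
  using nn_pos by (intro degree_lt_by_coeff) (auto simp: coeff_wv)

lemma wv_add: "wv (mw_add x y) = wv x + wv y"
  by (simp add: wv_def mw_add_def sum.distrib[symmetric] add_monom)

lemma wv_inj: assumes "x \<in> Kvec dd" "y \<in> Kvec dd" "wv x = wv y" shows "x = y"
proof
  fix i
  show "x i = y i"
  proof (cases "i < dd")
    case True
    have "coeff (wv x) (Suc i) = coeff (wv y) (Suc i)" using assms by simp
    then show ?thesis using True by (simp add: coeff_wv)
  next
    case False then show ?thesis using assms by (simp add: Kvec_def)
  qed
qed

lemma wv_surj: assumes "r \<in> T1n nn" shows "\<exists>x\<in>Kvec dd. wv x = r"
proof (intro bexI)
  define x where "x = (\<lambda>i. if i < dd then coeff r (Suc i) else 0)"
  show "x \<in> Kvec dd" by (simp add: Kvec_def x_def)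
  show "wv x = r"
  proof (rule poly_eqI)
    fix k
    show "coeff (wv x) k = coeff r k"
    proof (cases k)
      case 0 then show ?thesis using assms by (simp add: coeff_wv T1n_def)
    next
      case (Suc i)
      show ?thesis
      proof (cases "i < dd")
        case True then show ?thesis using Suc by (simp add: coeff_wv x_def)
      next
        case False
        then have "degree r < k" using assms Suc Suc_dd by (auto simp: T1n_def)
        then show ?thesis using False Suc by (simp add: coeff_wv coeff_eq_0)
      qed
    qed
  qed
qed

definition EE :: "(nat \<Rightarrow> 'k) \<Rightarrow> ('k poly \<Rightarrow> 'k poly) set" where
  "EE x = ext_cls q \<phi> \<psi> (Der0 q \<phi> \<psi>) (der_of q \<phi> \<psi> (\<Sum>i<nn - 1. monom (x i) (Suc i)))"

lemma EE_eq: "EE x = ClS S0 (wv x)"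
  unfolding EE_def der_of_eq wv_def[symmetric] using cls_0[OF wv_S0] .

lemma EE_bij: "bij_betw EE (Kvec dd) (Ext1_0 q \<phi> \<psi>)"
proof (rule bij_betw_imageI)
  show "inj_on EE (Kvec dd)"
  proof (rule inj_onI)
    fix x y assume xy: "x \<in> Kvec dd" "y \<in> Kvec dd" "EE x = EE y"
    then have "wv x - wv y \<in> ImS" using ClS_eq[OF wv_S0 wv_S0] by (simp add: EE_eq)
    then have "wv x = wv y" using red_unique wv_deg by blast
    then show "x = y" using wv_inj xy by blast
  qed
  show "EE ` Kvec dd = Ext1_0 q \<phi> \<psi>"
  proof
    show "EE ` Kvec dd \<subseteq> Ext1_0 q \<phi> \<psi>" by (auto simp: EE_eq Ext1_0_eq wv_S0)
    show "Ext1_0 q \<phi> \<psi> \<subseteq> EE ` Kvec dd"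
    proof
      fix X assume "X \<in> Ext1_0 q \<phi> \<psi>"
      then obtain v where v: "v \<in> S0" "X = ClS S0 v" by (auto simp: Ext1_0_eq)
      obtain x where x: "x \<in> Kvec dd" "wv x = red v" using wv_surj red_S0[OF v(1)] by blast
      have "red v \<in> S0" using red_S0[OF v(1)] by (simp add: T1n_def S0_def)
      then have "ClS S0 (red v) = ClS S0 v" using ClS_cong[OF _ v(1)] red_ImS[of v] ImS_uminus by fastforce
      then have "EE x = X" using x v by (simp add: EE_eq)
      then show "X \<in> EE ` Kvec dd" using x by blast
    qed
  qed
qed

lemma EE_add: "EE (mw_add x y) = ext_add q \<phi> \<psi> (Der0 q \<phi> \<psi>) (EE x) (EE y)"
  by (simp add: EE_eq wv_add add_0 wv_S0)

lemma EE_act_red: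
  assumes "a \<in> Apoly q" "wv z = red (TM (\<psi> a) (wv x))"
  shows "EE z = ext_act q \<phi> \<psi> (Der0 q \<phi> \<psi>) a (EE x)"
proof -
  have s: "TM (\<psi> a) (wv x) \<in> S0" using S0_p[OF assms(1) wv_S0] .
  have "EE z = ClS S0 (red (TM (\<psi> a) (wv x)))" using assms by (simp add: EE_eq)
  also have "\<dots> = ClS S0 (TM (\<psi> a) (wv x))"
  proof (rule ClS_cong)
    show "red (TM (\<psi> a) (wv x)) \<in> S0" using red_S0[OF s] by (simp add: T1n_def S0_def)
    show "TM (\<psi> a) (wv x) \<in> S0" by (rule s)
    have eq: "red (TM (\<psi> a) (wv x)) - TM (\<psi> a) (wv x) = - (TM (\<psi> a) (wv x) - red (TM (\<psi> a) (wv x)))" by simp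
    show "red (TM (\<psi> a) (wv x)) - TM (\<psi> a) (wv x) \<in> ImS" unfolding eq by (rule ImS_uminus[OF red_ImS])
  qed
  also have "\<dots> = ext_act q \<phi> \<psi> (Der0 q \<phi> \<psi>) a (EE x)"
    using act_0[OF wv_S0 assms(1)] by (simp add: EE_eq)
  finally show ?thesis .
qed

end

context DM begin

definition LM :: "'k poly \<Rightarrow> 'k poly poly \<Rightarrow> 'k poly poly" where
  "LM g S = bisum (degree g) (degree S) (\<lambda>l k. TM (monom (coeff g l) l) (coeff S k))"

definition RM :: "'k poly poly \<Rightarrow> 'k poly \<Rightarrow> 'k poly poly" where
  "RM S h = bisum (degree S) (degree h) (\<lambda>k m. smult (coeff h m ^ (q ^ k)) (coeff S k))"

definition evS :: "'k poly poly \<Rightarrow> 'k \<Rightarrow> 'k poly" where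
  "evS S c = map_poly (\<lambda>s. TE s c) S"

lemma coeff_evS: "coeff (evS S c) k = TE (coeff S k) c"
  by (simp add: evS_def coeff_map_poly)

lemma degree_evS: "degree (evS S c) \<le> degree S"
  by (simp add: evS_def map_poly_degree_leq)

lemma evS_add: "evS (S + T) c = evS S c + evS T c"
  by (rule poly_eqI) (simp add: coeff_evS tev_add)

lemma evS_minus: "evS (- S) c = - evS S c"
  using evS_add[of S "- S" c] by (metis add.right_inverse add_eq_0_iff evS_def map_poly_0 tev_0)

lemma evS_diff: "evS (S - T) c = evS S c - evS T c"
  using evS_add[of S "- T" c] evS_minus[of T c] by simp

lemma tev_if: "TE (if P then x else 0) c = (if P then TE x c else 0)"
  by simp

lemma tev_tm_monom: "TE (TM (monom a l) s) c = a * TE s c ^ (q ^ l)"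
  by (simp add: tev_tmul tev_monom)

lemma evS_LM: "evS (LM g S) c = TM g (evS S c)"
proof (rule poly_eqI)
  fix k
  have "coeff (evS (LM g S) c) k = (\<Sum>l\<le>degree g. \<Sum>j\<le>degree S. if l + j = k then coeff g l * TE (coeff S j) c ^ (q ^ l) else 0)"
    by (simp add: coeff_evS LM_def coeff_bisum tev_sum tev_if tev_tm_monom cong: if_cong)
  also have "\<dots> = coeff (TM g (evS S c)) k"
    by (simp add: tmul_bisum_ext[OF order.refl degree_evS] coeff_bisum coeff_evS)
  finally show "coeff (evS (LM g S) c) k = coeff (TM g (evS S c)) k" .
qed

lemma evS_RM: "evS (RM S h) c = TM (evS S c) h"
proof (rule poly_eqI)
  fix k
  have "coeff (evS (RM S h) c) k = (\<Sum>i\<le>degree S. \<Sum>j\<le>degree h. if i + j = k then TE (coeff S i) c * coeff h j ^ (q ^ i) else 0)"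
    by (simp add: coeff_evS RM_def coeff_bisum tev_sum tev_if tev_smult mult.commute cong: if_cong)
  also have "\<dots> = coeff (TM (evS S c) h) k"
    by (simp add: tmul_bisum_ext[OF degree_evS order.refl] coeff_bisum coeff_evS)
  finally show "coeff (evS (RM S h) c) k = coeff (TM (evS S c) h) k" .
qed

lemma coeff0_bisum_coeff:
  "coeff (coeff (bisum A B F) k) 0 = (\<Sum>i\<le>A. \<Sum>j\<le>B. if i + j = k then coeff (F i j) 0 else 0)"
  unfolding coeff_bisum coeff_sum by (intro sum.cong refl) auto

lemma RM_const0: assumes "\<And>k. coeff (coeff U k) 0 = 0" shows "coeff (coeff (RM U h) k) 0 = 0"
  unfolding RM_def coeff0_bisum_coeff using assms by (simp cong: if_cong)

lemma LM_const0: assumes "\<And>k. coeff (coeff U k) 0 = 0" shows "coeff (coeff (LM g U) k) 0 = 0"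
  unfolding LM_def coeff0_bisum_coeff using assms by (simp add: coeff_tmul_0 cong: if_cong)

lemma sred_exists:
  "(\<And>k. nn \<le> k \<Longrightarrow> coeff (coeff S k) 0 = 0) \<Longrightarrow>
   \<exists>R. degree R < nn \<and> (\<forall>k. coeff (coeff R k) 0 = coeff (coeff S k) 0) \<and> (\<forall>c. evS S c - evS R c \<in> ImS)"
proof (induction "degree S" arbitrary: S rule: less_induct)
  case less
  show ?case
  proof (cases "degree S < nn")
    case True then show ?thesis using ImS_0 by (intro exI[of _ S]) simp
  next
    case False
    define D where "D = degree S"
    define d where "d = D - nn"
    have Dd: "D = d + nn" using False by (simp add: d_def D_def)
    have S0: "S \<noteq> 0" using False nn_pos by auto
    define u where "u = smult (1 / lead_coeff \<phi>t ^ (q ^ d)) (lead_coeff S)"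
    have u0: "u \<noteq> 0" using S0 lead_phit_ne0 by (simp add: u_def)
    define U where "U = monom u d"
    have dU: "degree U = d" using u0 by (simp add: U_def degree_monom_eq)
    have lU: "lead_coeff U = u"
    proof -
      have "lead_coeff U = coeff U d" using dU by simp
      also have "\<dots> = u" by (simp add: U_def)
      finally show ?thesis .
    qed
    have uc: "coeff u 0 = 0" using less.prems[of D] Dd by (simp add: u_def D_def)
    have Uc: "coeff (coeff U k) 0 = 0" for k using uc by (simp add: U_def)
    define S' where "S' = S - (RM U \<phi>t - LM \<psi>t U)"
    have cw: "coeff S' k = 0" if "D \<le> k" for k
    proof (cases "k = D")
      case True
      have "coeff (RM U \<phi>t) (degree U + degree \<phi>t) = smult (coeff \<phi>t (degree \<phi>t) ^ (q ^ degree U)) (coeff U (degree U))"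
        unfolding RM_def by (rule coeff_bisum_top)
      then have "coeff (RM U \<phi>t) D = smult (lead_coeff \<phi>t ^ (q ^ d)) u"
        using lU by (simp only: dU Dd nn_def')
      also have "\<dots> = lead_coeff S" using lead_phit_ne0 by (simp add: u_def D_def)
      finally have 1: "coeff (RM U \<phi>t) D = lead_coeff S" .
      have 2: "coeff (LM \<psi>t U) D = 0" unfolding LM_def using rkpsi by (intro coeff_bisum_gt) (simp add: dU Dd)
      show ?thesis using 1 2 True by (simp add: S'_def D_def)
    next
      case False
      with that have k: "D < k" by simp
      have 1: "coeff (RM U \<phi>t) k = 0" unfolding RM_def using k by (intro coeff_bisum_gt) (simp add: dU Dd nn_def')
      have 2: "coeff (LM \<psi>t U) k = 0" unfolding LM_def using rkpsi k by (intro coeff_bisum_gt) (simp add: dU Dd)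
      have 3: "coeff S k = 0" using k by (simp add: D_def coeff_eq_0)
      show ?thesis using 1 2 3 by (simp add: S'_def)
    qed
    have degS': "degree S' < D" using nn_pos Dd by (intro degree_lt_by_coeff cw) auto
    have cS': "coeff (coeff S' k) 0 = coeff (coeff S k) 0" for k
      using RM_const0[OF Uc, of \<phi>t k] LM_const0[OF Uc, of \<psi>t k] by (simp add: S'_def)
    obtain R where R: "degree R < nn" "\<forall>k. coeff (coeff R k) 0 = coeff (coeff S' k) 0" "\<forall>c. evS S' c - evS R c \<in> ImS"
      using less.hyps[of S'] degS' less.prems cS' D_def by auto
    have "evS S c - evS R c \<in> ImS" for c
    proof -
      have eq: "evS S c - evS R c = (evS S' c - evS R c) + (TM (evS U c) \<phi>t - TM \<psi>t (evS U c))"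
        by (simp add: S'_def evS_diff evS_RM evS_LM)
      show ?thesis unfolding eq by (rule ImS_add[OF spec[OF R(3), of c] ImS_I[of "evS U c"]])
    qed
    then show ?thesis using R cS' by (intro exI[of _ R]) auto
  qed
qed

end

lemma monom_sum: "monom (\<Sum>i\<in>A. f i) n = (\<Sum>i\<in>A. monom (f i) n)"
  by (induction A rule: infinite_finite_induct) (auto simp: add_monom[symmetric])

context DM begin

lemma coeff0_LM: "coeff (coeff (LM g S) k) 0 = coeff g 0 * coeff (coeff S k) 0"
proof -
  let ?X = "\<lambda>j. coeff g 0 * coeff (coeff S j) 0"
  have "coeff (coeff (LM g S) k) 0 = (\<Sum>i\<le>degree g. \<Sum>j\<le>degree S. if i + j = k then coeff (TM (monom (coeff g i) i) (coeff S j)) 0 else 0)"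
    unfolding LM_def by (rule coeff0_bisum_coeff)
  also have "\<dots> = (\<Sum>i\<le>degree g. if i = 0 then (\<Sum>j\<le>degree S. if j = k then ?X j else 0) else 0)"
    by (intro sum.cong refl) (auto simp: coeff_tmul_0 intro!: sum.cong sum.neutral)
  also have "\<dots> = (\<Sum>j\<le>degree S. if j = k then ?X j else 0)" by simp
  also have "\<dots> = (if k \<le> degree S then ?X k else 0)" by simp
  also have "\<dots> = ?X k" by (auto simp: coeff_eq_0)
  finally show ?thesis .
qed

definition Sj :: "nat \<Rightarrow> 'k poly poly" where
  "Sj j = LM \<psi>t (monom 1 (Suc j))"

lemma tev_1: "TE 1 c = c"
  using tev_const[of 1 c] by (simp add: one_pCons)

lemma evS_monom1: "evS (monom 1 n) c = monom c n"
  by (rule poly_eqI) (simp add: coeff_evS tev_1)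

lemma evS_Sj: "evS (Sj j) c = TM \<psi>t (monom c (Suc j))"
  by (simp add: Sj_def evS_LM evS_monom1)

lemma Sj_const: "coeff (coeff (Sj j) k) 0 = (if k = Suc j then \<theta> else 0)"
  by (simp add: Sj_def coeff0_LM coeff0_psit)

definition Rj :: "nat \<Rightarrow> 'k poly poly" where
  "Rj j = (SOME R. degree R < nn \<and> (\<forall>k. coeff (coeff R k) 0 = coeff (coeff (Sj j) k) 0) \<and>
                   (\<forall>c. evS (Sj j) c - evS R c \<in> ImS))"

lemma Rj_props: assumes "j < dd"
  shows "degree (Rj j) < nn \<and> (\<forall>k. coeff (coeff (Rj j) k) 0 = coeff (coeff (Sj j) k) 0) \<and>
                   (\<forall>c. evS (Sj j) c - evS (Rj j) c \<in> ImS)"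
proof -
  have "\<exists>R. degree R < nn \<and> (\<forall>k. coeff (coeff R k) 0 = coeff (coeff (Sj j) k) 0) \<and>
                   (\<forall>c. evS (Sj j) c - evS R c \<in> ImS)"
  proof (rule sred_exists)
    fix k assume "nn \<le> k"
    then show "coeff (coeff (Sj j) k) 0 = 0" using assms Suc_dd by (simp add: Sj_const)
  qed
  then show ?thesis unfolding Rj_def by (rule someI_ex)
qed

lemma Rj_red: assumes "j < dd" shows "evS (Rj j) c = red (TM \<psi>t (monom c (Suc j)))"
proof -
  have "degree (evS (Rj j) c) < nn" using Rj_props[OF assms] degree_evS[of "Rj j" c] by linarith
  moreover have "TM \<psi>t (monom c (Suc j)) - evS (Rj j) c \<in> ImS" using Rj_props[OF assms] by (simp add: evS_Sj)
  ultimately show ?thesis by (intro red_eq[symmetric])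
qed

lemma Rj_const: assumes "j < dd" "i < dd" shows "coeff (coeff (Rj j) (Suc i)) 0 = (if i = j then \<theta> else 0)"
  using Rj_props[OF assms(1)] by (simp add: Sj_const)

definition mwM :: "(nat \<Rightarrow> nat \<Rightarrow> 'k poly) \<Rightarrow> (nat \<Rightarrow> 'k) \<Rightarrow> nat \<Rightarrow> 'k" where
  "mwM M x = (\<lambda>i. if i < dd then (\<Sum>j<dd. TE (M i j) (x j)) else 0)"

lemma mw_act_mwM: "mw_act q dd \<Phi> a x = mwM (\<Phi> a) x"
  unfolding mw_act_def mwM_def by (rule refl)

definition PP :: "nat \<Rightarrow> nat \<Rightarrow> 'k poly" where
  "PP i j = (if i < dd \<and> j < dd then coeff (Rj j) (Suc i) else 0)"

lemma PP_tmat: "is_tmat dd PP" by (simp add: is_tmat_def PP_def)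

lemma PP_const: "i < dd \<Longrightarrow> j < dd \<Longrightarrow> coeff (PP i j) 0 = (if i = j then \<theta> else 0)"
  by (simp add: PP_def Rj_const)

lemma wv_Rj: assumes "j < dd" shows "wv (\<lambda>i. TE (coeff (Rj j) (Suc i)) c) = evS (Rj j) c"
proof (rule poly_eqI)
  fix k
  show "coeff (wv (\<lambda>i. TE (coeff (Rj j) (Suc i)) c)) k = coeff (evS (Rj j) c) k"
  proof (cases "0 < k \<and> k - 1 < dd")
    case True then show ?thesis by (simp add: coeff_wv coeff_evS)
  next
    case False
    show ?thesis
    proof (cases "k = 0")
      case True
      have "coeff (evS (Rj j) c) 0 = coeff (TM \<psi>t (monom c (Suc j))) 0"
        using Rj_red[OF assms] by (simp add: red_coeff0)
      then show ?thesis using True by (simp add: coeff_wv coeff_tmul_0)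
    next
      case False2: False
      then have "nn \<le> k" using False Suc_dd by auto
      then have "coeff (Rj j) k = 0" using Rj_props[OF assms] by (intro coeff_eq_0) linarith
      then show ?thesis using False by (simp add: coeff_wv coeff_evS)
    qed
  qed
qed

lemma PP_mw: assumes "x \<in> Kvec dd" shows "wv (mwM PP x) = red (TM \<psi>t (wv x))"
proof -
  have "wv (mwM PP x) = (\<Sum>i<dd. \<Sum>j<dd. monom (TE (PP i j) (x j)) (Suc i))"
    by (simp add: wv_def mwM_def monom_sum)
  also have "\<dots> = (\<Sum>j<dd. \<Sum>i<dd. monom (TE (coeff (Rj j) (Suc i)) (x j)) (Suc i))"
    by (subst sum.swap) (simp add: PP_def)
  also have "\<dots> = (\<Sum>j<dd. evS (Rj j) (x j))"
    by (intro sum.cong refl) (simp add: wv_Rj[symmetric] wv_def)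
  also have "\<dots> = (\<Sum>j<dd. red (TM \<psi>t (monom (x j) (Suc j))))"
    by (intro sum.cong refl) (simp add: Rj_red)
  also have "\<dots> = red (TM \<psi>t (wv x))"
    by (simp add: red_sum tmul_sum_right wv_def)
  finally show ?thesis .
qed

end

context DM begin

declare One_nat_def [simp del]

lemma tm_if_left: "TM (if P then x else 0) y = (if P then TM x y else 0)" by simp
lemma tm_if_right: "TM y (if P then x else 0) = (if P then TM y x else 0)" by simp

definition zM :: "nat \<Rightarrow> nat \<Rightarrow> 'k poly" where "zM = (\<lambda>i j. 0)"
definition scalI :: "'k \<Rightarrow> nat \<Rightarrow> nat \<Rightarrow> 'k poly" where
  "scalI c = (\<lambda>i j. if i = j \<and> i < dd then [:c:] else 0)"
definition madd :: "(nat \<Rightarrow> nat \<Rightarrow> 'k poly) \<Rightarrow> (nat \<Rightarrow> nat \<Rightarrow> 'k poly) \<Rightarrow> nat \<Rightarrow> nat \<Rightarrow> 'k poly" where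
  "madd M N = (\<lambda>i j. M i j + N i j)"
definition msm :: "'k \<Rightarrow> (nat \<Rightarrow> nat \<Rightarrow> 'k poly) \<Rightarrow> nat \<Rightarrow> nat \<Rightarrow> 'k poly" where
  "msm c M = (\<lambda>i j. smult c (M i j))"
abbreviation tmm :: "(nat \<Rightarrow> nat \<Rightarrow> 'k poly) \<Rightarrow> (nat \<Rightarrow> nat \<Rightarrow> 'k poly) \<Rightarrow> nat \<Rightarrow> nat \<Rightarrow> 'k poly" where
  "tmm \<equiv> tmat_mul q dd"

lemma tmm_zero_right: "tmm M zM = zM"
  by (simp add: tmat_mul_def zM_def)

lemma tmm_madd_right: "tmm M (madd N L) = madd (tmm M N) (tmm M L)"
  by (simp add: tmat_mul_def madd_def tmul_add_right sum.distrib)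

lemma tmm_madd_left: "tmm (madd M N) L = madd (tmm M L) (tmm N L)"
  by (simp add: tmat_mul_def madd_def tmul_add_left sum.distrib)

lemma tmm_assoc: "tmm (tmm A B) C = tmm A (tmm B C)"
proof (intro ext)
  fix i j
  have "tmm (tmm A B) C i j = (\<Sum>k<dd. \<Sum>l<dd. TM (A i l) (TM (B l k) (C k j)))"
    by (simp add: tmat_mul_def tmul_sum_left tmul_assoc)
  also have "\<dots> = (\<Sum>l<dd. \<Sum>k<dd. TM (A i l) (TM (B l k) (C k j)))" by (rule sum.swap)
  also have "\<dots> = tmm A (tmm B C) i j"
    by (simp add: tmat_mul_def tmul_sum_right)
  finally show "tmm (tmm A B) C i j = tmm A (tmm B C) i j" .
qed

lemma tmm_scalI_left: assumes "is_tmat dd M" shows "tmm (scalI c) M = msm c M"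
proof (intro ext)
  fix i j
  show "tmm (scalI c) M i j = msm c M i j"
  proof (cases "i < dd")
    case True
    have "tmm (scalI c) M i j = (\<Sum>k<dd. if k = i then TM [:c:] (M i j) else 0)"
      unfolding tmat_mul_def using True by (intro sum.cong refl) (auto simp: scalI_def)
    also have "\<dots> = smult c (M i j)" using True by (simp add: tmul_const_left)
    finally show ?thesis by (simp add: msm_def)
  next
    case False
    then show ?thesis using assms by (simp add: tmat_mul_def scalI_def msm_def is_tmat_def)
  qed
qed

lemma tmm_scalI1_right: assumes "is_tmat dd M" shows "tmm M (scalI 1) = M"
proof (intro ext)
  fix i j
  show "tmm M (scalI 1) i j = M i j"
  proof (cases "j < dd")
    case True
    have "tmm M (scalI 1) i j = (\<Sum>k<dd. if k = j then TM (M i j) [:1:] else 0)"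
      unfolding tmat_mul_def using True by (intro sum.cong refl) (auto simp: scalI_def)
    also have "\<dots> = M i j" using True tmul_const_right[OF Fq_1] by simp
    finally show ?thesis .
  next
    case False
    then show ?thesis using assms by (simp add: tmat_mul_def scalI_def is_tmat_def)
  qed
qed

lemma tmm_msm_right: "c \<in> Fq q \<Longrightarrow> tmm M (msm c N) = msm c (tmm M N)"
  by (simp add: tmat_mul_def msm_def tmul_smult_right smult_sum_right)

lemma tmm_msm_left: "tmm (msm c M) N = msm c (tmm M N)"
  by (simp add: tmat_mul_def msm_def tmul_smult_left smult_sum_right)

lemma tmat_zM: "is_tmat dd zM" by (simp add: is_tmat_def zM_def)
lemma tmat_scalI: "is_tmat dd (scalI c)" by (simp add: is_tmat_def scalI_def)
lemma tmat_madd: "is_tmat dd M \<Longrightarrow> is_tmat dd N \<Longrightarrow> is_tmat dd (madd M N)"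
  by (simp add: is_tmat_def madd_def)
lemma tmat_tmm: "is_tmat dd M \<Longrightarrow> is_tmat dd N \<Longrightarrow> is_tmat dd (tmm M N)"
  by (auto simp: is_tmat_def tmat_mul_def)

lemma scalI_add: "scalI (c + e) = madd (scalI c) (scalI e)"
  by (auto simp: fun_eq_iff scalI_def madd_def)
lemma scalI_mult: "scalI (c * e) = msm c (scalI e)"
  by (auto simp: fun_eq_iff scalI_def msm_def)
lemma scalI_0: "scalI 0 = zM"
  by (auto simp: fun_eq_iff scalI_def zM_def)
lemma msm_madd: "msm c (madd M N) = madd (msm c M) (msm c N)"
  by (simp add: msm_def madd_def smult_add_right)
lemma madd_zM_left: "madd zM M = M"
  by (simp add: madd_def zM_def)
lemma madd_zM_right: "madd M zM = M"
  by (simp add: madd_def zM_def)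
lemma madd_assoc: "madd (madd A B) C = madd A (madd B C)"
  by (simp add: madd_def add.assoc)
lemma madd_commute: "madd A B = madd B A"
  by (simp add: madd_def add.commute)
lemma madd_left_commute: "madd A (madd B C) = madd B (madd A C)"
  by (simp add: madd_def add.left_commute)

definition Pi0 :: "'k poly \<Rightarrow> nat \<Rightarrow> nat \<Rightarrow> 'k poly" where
  "Pi0 a = foldr (\<lambda>c M. madd (scalI c) (tmm PP M)) (coeffs a) zM"

lemma Pi0_0: "Pi0 0 = zM" by (simp add: Pi0_def)

lemma Pi0_pCons: "Pi0 (pCons c a) = madd (scalI c) (tmm PP (Pi0 a))"
proof (cases "c = 0 \<and> a = 0")
  case True then show ?thesis by (simp add: Pi0_0 scalI_0 tmm_zero_right madd_zM_left)
next
  case False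
  then have "coeffs (pCons c a) = c # coeffs a" by (auto simp: cCons_def)
  then show ?thesis by (simp add: Pi0_def)
qed

lemma Pi0_tmat: "is_tmat dd (Pi0 a)"
  by (induction a) (simp_all add: Pi0_0 tmat_zM Pi0_pCons tmat_madd tmat_scalI tmat_tmm PP_tmat)

lemma Pi0_add: "Pi0 (a + b) = madd (Pi0 a) (Pi0 b)"
proof (induction a arbitrary: b)
  case 0 then show ?case by (simp add: Pi0_0 madd_zM_left)
next
  case (pCons c a)
  obtain e b' where b: "b = pCons e b'" by (cases b) auto
  show ?case using pCons.IH
    by (simp add: b Pi0_pCons scalI_add tmm_madd_right madd_assoc madd_left_commute)
qed

lemma Pi0_smult: "c \<in> Fq q \<Longrightarrow> Pi0 (smult c a) = msm c (Pi0 a)"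
proof (induction a)
  case 0 then show ?case by (simp add: Pi0_0 msm_def zM_def)
next
  case (pCons e a)
  then show ?case by (simp add: Pi0_pCons scalI_mult msm_madd tmm_msm_right)
qed

lemma Pi0_mult: "a \<in> Apoly q \<Longrightarrow> Pi0 (a * b) = tmm (Pi0 a) (Pi0 b)"
proof (induction a rule: Apoly_induct)
  case 0
  have "tmm zM M = zM" for M by (simp add: tmat_mul_def zM_def)
  then show ?case by (simp add: Pi0_0)
next
  case (pCons c a)
  have "Pi0 (pCons c a * b) = Pi0 (smult c b + pCons 0 (a * b))" by simp
  also have "\<dots> = madd (msm c (Pi0 b)) (madd (scalI 0) (tmm PP (tmm (Pi0 a) (Pi0 b))))"
    using pCons by (simp add: Pi0_add Pi0_smult Pi0_pCons)
  also have "\<dots> = tmm (Pi0 (pCons c a)) (Pi0 b)"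
    by (simp add: Pi0_pCons tmm_madd_left tmm_scalI_left[OF Pi0_tmat] tmm_assoc scalI_0 madd_zM_left)
  finally show ?case .
qed

lemma Pi0_one: "Pi0 1 = tmat_one dd"
proof -
  have "Pi0 1 = Pi0 (pCons 1 0)" by (simp add: one_pCons)
  also have "\<dots> = scalI 1" by (simp add: Pi0_pCons Pi0_0 tmm_zero_right madd_zM_right)
  also have "\<dots> = tmat_one dd" by (auto simp: fun_eq_iff scalI_def tmat_one_def one_pCons)
  finally show ?thesis .
qed

lemma Pi0_t: "Pi0 tvar = PP"
proof -
  have "Pi0 [:1:] = scalI 1" by (simp add: Pi0_pCons Pi0_0 tmm_zero_right madd_zM_right)
  then have "Pi0 tvar = madd (scalI 0) (tmm PP (scalI 1))" by (simp add: Pi0_pCons)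
  also have "\<dots> = PP" by (simp add: tmm_scalI1_right[OF PP_tmat] scalI_0 madd_zM_left)
  finally show ?thesis .
qed

lemma Pi0_nilp: "nilpotent_kmat dd (\<lambda>i j. coeff (Pi0 tvar i j) 0 - (if i = j then \<theta> else 0))"
  unfolding nilpotent_kmat_def
proof (intro exI[of _ 1] allI impI)
  fix i j assume ij: "i < dd" "j < dd"
  show "((kmat_mul dd (\<lambda>i j. coeff (Pi0 tvar i j) 0 - (if i = j then \<theta> else 0))) ^^ 1) (kmat_one dd) i j = 0"
    using ij by (simp add: kmat_mul_def Pi0_t PP_const One_nat_def)
qed

lemma Pi0_tmodule: "t_module q \<theta> dd Pi0"
  unfolding t_module_def
  by (simp add: Pi0_tmat Pi0_one Pi0_add[unfolded madd_def] Pi0_mult Pi0_smult[unfolded msm_def] Pi0_nilp)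

lemma mwM_zM: "mwM zM x = (\<lambda>i. 0)"
  by (simp add: mwM_def zM_def cong: if_cong)

lemma mwM_madd: "mwM (madd M N) x = (\<lambda>i. mwM M x i + mwM N x i)"
  by (auto simp: mwM_def madd_def tev_add sum.distrib)

lemma mwM_scalI: assumes "x \<in> Kvec dd" shows "mwM (scalI c) x = (\<lambda>i. c * x i)"
proof
  fix i
  show "mwM (scalI c) x i = c * x i"
  proof (cases "i < dd")
    case True
    have "(\<Sum>j<dd. TE (scalI c i j) (x j)) = (\<Sum>j<dd. if j = i then c * x i else 0)"
      by (intro sum.cong refl) (auto simp: scalI_def tev_const)
    then show ?thesis using True by (simp add: mwM_def)
  next
    case False then show ?thesis using assms by (simp add: mwM_def Kvec_def)
  qed
qed

lemma mwM_tmm: "mwM (tmm M N) x = mwM M (mwM N x)"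
proof
  fix i
  show "mwM (tmm M N) x i = mwM M (mwM N x) i"
  proof (cases "i < dd")
    case True
    have "mwM (tmm M N) x i = (\<Sum>j<dd. \<Sum>k<dd. TE (M i k) (TE (N k j) (x j)))"
      using True by (simp add: mwM_def tmat_mul_def tev_sum tev_tmul)
    also have "\<dots> = (\<Sum>k<dd. \<Sum>j<dd. TE (M i k) (TE (N k j) (x j)))" by (rule sum.swap)
    also have "\<dots> = mwM M (mwM N x) i"
      using True by (simp add: mwM_def tev_sumx)
    finally show ?thesis .
  next
    case False then show ?thesis by (simp add: mwM_def)
  qed
qed

lemma mwM_Kvec: "mwM M x \<in> Kvec dd"
  by (simp add: mwM_def Kvec_def)

lemma wv_smult: "wv (\<lambda>i. c * x i) = smult c (wv x)"
  by (simp add: wv_def smult_sum_right smult_monom)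

lemma wv_add': "wv (\<lambda>i. x i + y i) = wv x + wv y"
  using wv_add[of x y] by (simp add: mw_add_def)

lemma wv_zero: "wv (\<lambda>i. 0) = 0"
  by (simp add: wv_def)

lemma KEY: "a \<in> Apoly q \<Longrightarrow> x \<in> Kvec dd \<Longrightarrow> wv (mwM (Pi0 a) x) = red (TM (\<psi> a) (wv x))"
proof (induction a arbitrary: x rule: Apoly_induct)
  case 0 then show ?case by (simp add: Pi0_0 mwM_zM wv_zero psi_0)
next
  case (pCons c a)
  let ?y = "mwM (Pi0 a) x"
  have "wv (mwM (Pi0 (pCons c a)) x) = smult c (wv x) + wv (mwM PP ?y)"
    using pCons.prems by (simp add: Pi0_pCons mwM_madd mwM_scalI mwM_tmm wv_add' wv_smult)
  also have "\<dots> = smult c (wv x) + red (TM \<psi>t (red (TM (\<psi> a) (wv x))))"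
    using PP_mw[OF mwM_Kvec] pCons.IH[OF pCons.prems] by simp
  also have "\<dots> = red (smult c (wv x)) + red (TM \<psi>t (TM (\<psi> a) (wv x)))"
  proof -
    have "degree (smult c (wv x)) < nn" using wv_deg[of x] degree_smult_le[of c "wv x"] by linarith
    then show ?thesis using red_psi[OF Apoly_t] red_small by simp
  qed
  also have "\<dots> = red (TM (\<psi> (pCons c a)) (wv x))"
    using pCons by (simp add: red_add[symmetric] psi_pCons tmul_add_left tmul_const_left tmul_assoc)
  finally show ?case .
qed

lemma part_iv:
  "\<exists>Pi0. t_module q \<theta> (nn - 1) Pi0 \<and>
        (let E = (\<lambda>x. ext_cls q \<phi> \<psi> (Der0 q \<phi> \<psi>)
                     (der_of q \<phi> \<psi> (\<Sum>i<nn - 1. monom (x i) (Suc i)))) in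
          bij_betw E (Kvec (nn - 1)) (Ext1_0 q \<phi> \<psi>) \<and>
          (\<forall>x\<in>Kvec (nn - 1). \<forall>y\<in>Kvec (nn - 1).
             E (mw_add x y) = ext_add q \<phi> \<psi> (Der0 q \<phi> \<psi>) (E x) (E y)) \<and>
          (\<forall>a\<in>Apoly q. \<forall>x\<in>Kvec (nn - 1).
             E (mw_act q (nn - 1) Pi0 a x) = ext_act q \<phi> \<psi> (Der0 q \<phi> \<psi>) a (E x)))"
proof (intro exI[of _ Pi0] conjI)
  show "t_module q \<theta> (nn - 1) Pi0" by (rule Pi0_tmodule)
  have E: "(\<lambda>x. ext_cls q \<phi> \<psi> (Der0 q \<phi> \<psi>) (der_of q \<phi> \<psi> (\<Sum>i<nn - 1. monom (x i) (Suc i)))) = EE"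
    by (simp add: EE_def fun_eq_iff)
  have 3: "\<forall>a\<in>Apoly q. \<forall>x\<in>Kvec dd. EE (mw_act q dd Pi0 a x) = ext_act q \<phi> \<psi> (Der0 q \<phi> \<psi>) a (EE x)"
    using KEY EE_act_red by (simp add: mw_act_mwM)
  show "let E = (\<lambda>x. ext_cls q \<phi> \<psi> (Der0 q \<phi> \<psi>) (der_of q \<phi> \<psi> (\<Sum>i<nn - 1. monom (x i) (Suc i)))) in
          bij_betw E (Kvec (nn - 1)) (Ext1_0 q \<phi> \<psi>) \<and>
          (\<forall>x\<in>Kvec (nn - 1). \<forall>y\<in>Kvec (nn - 1).
             E (mw_add x y) = ext_add q \<phi> \<psi> (Der0 q \<phi> \<psi>) (E x) (E y)) \<and>
          (\<forall>a\<in>Apoly q. \<forall>x\<in>Kvec (nn - 1).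
             E (mw_act q (nn - 1) Pi0 a x) = ext_act q \<phi> \<psi> (Der0 q \<phi> \<psi>) a (E x))"
    unfolding Let_def E using EE_bij EE_add 3 by blast
qed

end

theorem lemma5p2:
  fixes \<phi> \<psi> :: "'k::field poly \<Rightarrow> 'k poly" and \<theta> :: 'k and p q m n :: nat
  assumes "prime p" and "CHAR('k) = p" and "m > 0" and "q = p ^ m"
    and "card (Fq q :: 'k set) = q"
    and "drinfeld_module q \<theta> \<phi>" and "drinfeld_module q \<theta> \<psi>"
    and "rk \<phi> > rk \<psi>" and "n = rk \<phi>"
  shows
    \<comment> \<open>(i) Ext^1_{0,tau} is isomorphic to K{tau}_{<1,n)} as F_q[t]-module\<close>
    "(\<exists>F. bij_betw F (Ext1_0 q \<phi> \<psi>) (T1n n) \<and>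
        (\<forall>X\<in>Ext1_0 q \<phi> \<psi>. \<forall>Y\<in>Ext1_0 q \<phi> \<psi>.
           F (ext_add q \<phi> \<psi> (Der0 q \<phi> \<psi>) X Y) = trans_add q \<phi> \<psi> (F X) (F Y)) \<and>
        (\<forall>a\<in>Apoly q. \<forall>X\<in>Ext1_0 q \<phi> \<psi>.
           F (ext_act q \<phi> \<psi> (Der0 q \<phi> \<psi>) a X) = trans_act q \<phi> \<psi> a (F X)))
     \<and>
    \<comment> \<open>(ii) K{tau}_{<1,n)} is a submodule of K{tau}_{<n}\<close>
     (T1n n \<subseteq> Tlt n \<and> 0 \<in> T1n n \<and>
      (\<forall>v\<in>T1n n. \<forall>w\<in>T1n n. trans_add q \<phi> \<psi> v w \<in> T1n n) \<and>
      (\<forall>a\<in>Apoly q. \<forall>w\<in>T1n n. trans_act q \<phi> \<psi> a w \<in> T1n n))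
     \<and>
    \<comment> \<open>(iii) the natural map Ext^1_{0,tau} \<rightarrow> Ext^1_tau, [\<delta>] \<mapsto> [\<delta>], is an injective module map
        whose image is a submodule\<close>
     (let j = (\<lambda>X. ext_cls q \<phi> \<psi> (Der q \<phi> \<psi>) (rep X)) in
        j ` Ext1_0 q \<phi> \<psi> \<subseteq> Ext1 q \<phi> \<psi> \<and> inj_on j (Ext1_0 q \<phi> \<psi>) \<and>
        (\<forall>X\<in>Ext1_0 q \<phi> \<psi>. \<forall>Y\<in>Ext1_0 q \<phi> \<psi>.
           j (ext_add q \<phi> \<psi> (Der0 q \<phi> \<psi>) X Y) = ext_add q \<phi> \<psi> (Der q \<phi> \<psi>) (j X) (j Y)) \<and>
        (\<forall>a\<in>Apoly q. \<forall>X\<in>Ext1_0 q \<phi> \<psi>.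
           j (ext_act q \<phi> \<psi> (Der0 q \<phi> \<psi>) a X) = ext_act q \<phi> \<psi> (Der q \<phi> \<psi>) a (j X)) \<and>
        (\<forall>X\<in>j ` Ext1_0 q \<phi> \<psi>. \<forall>Y\<in>j ` Ext1_0 q \<phi> \<psi>.
           ext_add q \<phi> \<psi> (Der q \<phi> \<psi>) X Y \<in> j ` Ext1_0 q \<phi> \<psi>) \<and>
        (\<forall>a\<in>Apoly q. \<forall>X\<in>j ` Ext1_0 q \<phi> \<psi>.
           ext_act q \<phi> \<psi> (Der q \<phi> \<psi>) a X \<in> j ` Ext1_0 q \<phi> \<psi>))
     \<and>
    \<comment> \<open>(iv) a t-module Pi^0 of dimension n-1 whose Mordell-Weil module is isomorphic to
        Ext^1_{0,tau} via (c_1,...,c_{n-1}) \<mapsto> [\<delta>], \<delta>(t) = sum c_i tau^i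
        (vector entry x i is the coordinate c_{i+1})\<close>
     (\<exists>Pi0. t_module q \<theta> (n - 1) Pi0 \<and>
        (let E = (\<lambda>x. ext_cls q \<phi> \<psi> (Der0 q \<phi> \<psi>)
                     (der_of q \<phi> \<psi> (\<Sum>i<n - 1. monom (x i) (Suc i)))) in
          bij_betw E (Kvec (n - 1)) (Ext1_0 q \<phi> \<psi>) \<and>
          (\<forall>x\<in>Kvec (n - 1). \<forall>y\<in>Kvec (n - 1).
             E (mw_add x y) = ext_add q \<phi> \<psi> (Der0 q \<phi> \<psi>) (E x) (E y)) \<and>
          (\<forall>a\<in>Apoly q. \<forall>x\<in>Kvec (n - 1).
             E (mw_act q (n - 1) Pi0 a x) = ext_act q \<phi> \<psi> (Der0 q \<phi> \<psi>) a (E x))))"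
proof -
  interpret DM q m \<theta> \<phi> \<psi>
    using assms by unfold_locales auto
  show ?thesis
    unfolding assms(9)
    apply (intro conjI)
          apply (rule part_i)
         apply (auto simp: T1n_def Tlt_def)[1]
        apply (simp add: T1n_def nn_pos)
       using part_ii apply blast
      using part_ii apply blast
     apply (rule part_iii)
    apply (rule part_iv)
    done
qed

end
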